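(* Let $C_2\xrightarrow{\partial_2}C_1\xrightarrow{\partial_1}C_0$ be a 2-crossed module with Peiffer lifting $\{-,-\}$. Let $P_3\subseteq C_1$ be the (normal) subgroup generated by all $\langle\langle x,y\rangle,z\rangle$ and $\langle x,\langle y,z\rangle\rangle$, and $P_3'\subseteq C_2$ the (normal) subgroup generated by all $\{\langle x,y\rangle,z\}$ and $\{x,\langle y,z\rangle\}$, for $x,y,z\in C_1$, where $\langle x,y\rangle={}^{\partial_1x}y\,xy^{-1}x^{-1}$. Put $M=C_1/P_3$, $L=C_2/P_3'$, $N=C_0$, with quotient maps $q_1:C_1\to M$, $q_2:C_2\to L$. Then $\partial:M\to N$, $\partial(q_1x)=\partial_1x$, and $\delta:L\to M$, $\delta(q_2 l)=q_1\partial_2 l$, are well-defined homomorphisms ($\partial_1(P_3)=1$, $\partial_2(P_3')=P_3$); with $C=(M^{cr})^{ab}$ and $x\mapsto\bar x$ the quotient $M\to C$, the formula $\omega(\overline{q_1x}\otimes\overline{q_1y})=q_2\{x,y\}$ ($x,y\in C_1$) defines a homomorphism $\omega:C\otimes C\to L$, and, with the $N$-actions induced from those of the 2-crossed module, $(\omega,\delta,\partial)$, i.e. $C\otimes C\xrightarrow{\omega}L\xrightarrow{\delta}M\xrightarrow{\partial}N$, is a quadratic module.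
   Context: A 2-crossed module consists of a complex of groups $C_2\xrightarrow{\partial_2}C_1\xrightarrow{\partial_1}C_0$ ($\partial_1\partial_2=1$), actions of $C_0$ on $C_1$ and $C_2$ with $\partial_2,\partial_1$ equivariant ($C_0$ acting on itself by conjugation), and a $C_0$-equivariant function $\{-,-\}:C_1\times C_1\to C_2$ such that for $l,l'\in C_2$, $m,m',m''\in C_1$, $n\in C_0$: 2CM1 $\partial_2\{m,m'\}=({}^{\partial_1 m}m')mm'^{-1}m^{-1}$; 2CM2 $\{\partial_2 l,\partial_2 l'\}=[l',l]$; 2CM3 (i) $\{mm',m''\}={}^{\partial_1 m}\{m',m''\}\{m,m'm''m'^{-1}\}$, (ii) $\{m,m'm''\}=\{m,m'\}\,{}^{mm'm^{-1}}\{m,m''\}$ where ${}^{x}l:=\{\partial_2 l,x\}l$; 2CM4 $\{m,\partial_2 l\}\{\partial_2 l,m\}={}^{\partial_1 m}l\,l^{-1}$; 2CM5 ${}^{n}\{m,m'\}=\{{}^{n}m,{}^{n}m'\}$. A pre-crossed module is a homomorphism $\partial:M\to N$ with an $N$-action on $M$ such that $\partial({}^{n}m)=n\partial(m)n^{-1}$. Its Peiffer commutator is $\langle x,y\rangle={}^{\partial x}y\,xy^{-1}x^{-1}$; $P_2(\partial)$ is the subgroup generated by Peiffer commutators, $P_3(\partial)$ the subgroup generated by Peiffer commutators of length 3 ($\langle\langle x,y\rangle,z\rangle$, $\langle x,\langle y,z\rangle\rangle$). A nil(2)-module is a pre-crossed module with $P_3(\partial)=1$. $M^{cr}=M/P_2(\partial)$,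 $G^{ab}=G/[G,G]$, and $C=(M^{cr})^{ab}$; $C\otimes C$ is the tensor product of abelian groups. A quadratic module $(\omega,\delta,\partial)$ is a diagram of homomorphisms $C\otimes C\xrightarrow{\omega}L\xrightarrow{\delta}M\xrightarrow{\partial}N$ with $w:C\otimes C\to M$ such that: QM1 $\partial:M\to N$ is a nil(2)-module, $C=(M^{cr})^{ab}$, $x\mapsto\bar x$ the quotient $M\to C$, and $w(\bar x\otimes\bar y)=\langle x,y\rangle$; QM2 $\partial\delta=1$ and $\delta\omega=w$, i.e. $\delta\omega(\bar x\otimes\bar y)={}^{\partial x}y\,xy^{-1}x^{-1}$; QM3 $L$ is an $N$-group, all maps are $N$-equivariant, and ${}^{\partial x}a=\omega\big((\bar x\otimes\overline{\delta a})(\overline{\delta a}\otimes\bar x)\big)a$ for $a\in L$, $x\in M$; QM4 $\omega(\overline{\delta a}\otimes\overline{\delta b})=[b,a]$ for $a,b\in L$. *)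

theory Defs
  imports "HOL-Algebra.Free_Abelian_Groups" "HOL-Algebra.Generated_Groups"
begin

definition aut_action :: "('n,'a) monoid_scheme \<Rightarrow> ('g,'b) monoid_scheme \<Rightarrow> ('n \<Rightarrow> 'g \<Rightarrow> 'g) \<Rightarrow> bool"
  where "aut_action N G act \<longleftrightarrow>
     (\<forall>n\<in>carrier N. act n \<in> hom G G) \<and>
     (\<forall>x\<in>carrier G. act \<one>\<^bsub>N\<^esub> x = x) \<and>
     (\<forall>n\<in>carrier N. \<forall>n'\<in>carrier N. \<forall>x\<in>carrier G. act (n \<otimes>\<^bsub>N\<^esub> n') x = act n (act n' x))"

definition pre_crossed_module ::
  "('m,'a) monoid_scheme \<Rightarrow> ('n,'b) monoid_scheme \<Rightarrow> ('m \<Rightarrow> 'n) \<Rightarrow> ('n \<Rightarrow> 'm \<Rightarrow> 'm) \<Rightarrow> bool"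
  where "pre_crossed_module M N d act \<longleftrightarrow>
     group M \<and> group N \<and> d \<in> hom M N \<and> aut_action N M act \<and>
     (\<forall>n\<in>carrier N. \<forall>m\<in>carrier M. d (act n m) = n \<otimes>\<^bsub>N\<^esub> d m \<otimes>\<^bsub>N\<^esub> inv\<^bsub>N\<^esub> n)"

definition peiffer :: "('m,'a) monoid_scheme \<Rightarrow> ('m \<Rightarrow> 'n) \<Rightarrow> ('n \<Rightarrow> 'm \<Rightarrow> 'm) \<Rightarrow> 'm \<Rightarrow> 'm \<Rightarrow> 'm"
  where "peiffer M d act x y = act (d x) y \<otimes>\<^bsub>M\<^esub> x \<otimes>\<^bsub>M\<^esub> inv\<^bsub>M\<^esub> y \<otimes>\<^bsub>M\<^esub> inv\<^bsub>M\<^esub> x"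

definition P2 :: "('m,'a) monoid_scheme \<Rightarrow> ('m \<Rightarrow> 'n) \<Rightarrow> ('n \<Rightarrow> 'm \<Rightarrow> 'm) \<Rightarrow> 'm set"
  where "P2 M d act = generate M {peiffer M d act x y | x y. x \<in> carrier M \<and> y \<in> carrier M}"

definition P3 :: "('m,'a) monoid_scheme \<Rightarrow> ('m \<Rightarrow> 'n) \<Rightarrow> ('n \<Rightarrow> 'm \<Rightarrow> 'm) \<Rightarrow> 'm set"
  where "P3 M d act = generate M
     ({peiffer M d act (peiffer M d act x y) z | x y z. x \<in> carrier M \<and> y \<in> carrier M \<and> z \<in> carrier M}
      \<union> {peiffer M d act x (peiffer M d act y z) | x y z. x \<in> carrier M \<and> y \<in> carrier M \<and> z \<in> carrier M})"

definition nil2_module ::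
  "('m,'a) monoid_scheme \<Rightarrow> ('n,'b) monoid_scheme \<Rightarrow> ('m \<Rightarrow> 'n) \<Rightarrow> ('n \<Rightarrow> 'm \<Rightarrow> 'm) \<Rightarrow> bool"
  where "nil2_module M N d act \<longleftrightarrow> pre_crossed_module M N d act \<and> P3 M d act = {\<one>\<^bsub>M\<^esub>}"

definition abelianization :: "('g,'a) monoid_scheme \<Rightarrow> 'g set monoid"
  where "abelianization G = G Mod (derived G (carrier G))"

definition ab_class :: "('g,'a) monoid_scheme \<Rightarrow> 'g \<Rightarrow> 'g set"
  where "ab_class G x = derived G (carrier G) #>\<^bsub>G\<^esub> x"

definition Mcr :: "('m,'a) monoid_scheme \<Rightarrow> ('m \<Rightarrow> 'n) \<Rightarrow> ('n \<Rightarrow> 'm \<Rightarrow> 'm) \<Rightarrow> 'm set monoid"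
  where "Mcr M d act = M Mod (P2 M d act)"

definition Cgrp :: "('m,'a) monoid_scheme \<Rightarrow> ('m \<Rightarrow> 'n) \<Rightarrow> ('n \<Rightarrow> 'm \<Rightarrow> 'm) \<Rightarrow> 'm set set monoid"
  where "Cgrp M d act = abelianization (Mcr M d act)"

definition bar :: "('m,'a) monoid_scheme \<Rightarrow> ('m \<Rightarrow> 'n) \<Rightarrow> ('n \<Rightarrow> 'm \<Rightarrow> 'm) \<Rightarrow> 'm \<Rightarrow> 'm set set"
  where "bar M d act x = ab_class (Mcr M d act) (P2 M d act #>\<^bsub>M\<^esub> x)"

definition tensor_rels :: "('c,'a) monoid_scheme \<Rightarrow> ('c \<times> 'c \<Rightarrow>\<^sub>0 int) set"
  where "tensor_rels A =
     {frag_of (a \<otimes>\<^bsub>A\<^esub> a', b) - frag_of (a, b) - frag_of (a', b) | a a' b.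
        a \<in> carrier A \<and> a' \<in> carrier A \<and> b \<in> carrier A}
   \<union> {frag_of (a, b \<otimes>\<^bsub>A\<^esub> b') - frag_of (a, b) - frag_of (a, b') | a b b'.
        a \<in> carrier A \<and> b \<in> carrier A \<and> b' \<in> carrier A}"

definition tensor_free :: "('c,'a) monoid_scheme \<Rightarrow> ('c \<times> 'c \<Rightarrow>\<^sub>0 int) monoid"
  where "tensor_free A = free_Abelian_group (carrier A \<times> carrier A)"

definition tensor_sub :: "('c,'a) monoid_scheme \<Rightarrow> ('c \<times> 'c \<Rightarrow>\<^sub>0 int) set"
  where "tensor_sub A = generate (tensor_free A) (tensor_rels A)"

definition tensor :: "('c,'a) monoid_scheme \<Rightarrow> ('c \<times> 'c \<Rightarrow>\<^sub>0 int) set monoid"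
  where "tensor A = tensor_free A Mod tensor_sub A"

definition tens :: "('c,'a) monoid_scheme \<Rightarrow> 'c \<Rightarrow> 'c \<Rightarrow> ('c \<times> 'c \<Rightarrow>\<^sub>0 int) set"
  where "tens A a b = tensor_sub A #>\<^bsub>tensor_free A\<^esub> frag_of (a, b)"

definition commutator :: "('g,'a) monoid_scheme \<Rightarrow> 'g \<Rightarrow> 'g \<Rightarrow> 'g"
  where "commutator G a b = a \<otimes>\<^bsub>G\<^esub> b \<otimes>\<^bsub>G\<^esub> inv\<^bsub>G\<^esub> a \<otimes>\<^bsub>G\<^esub> inv\<^bsub>G\<^esub> b"

definition quadratic_module ::
  "('l,'a) monoid_scheme \<Rightarrow> ('m,'b) monoid_scheme \<Rightarrow> ('n,'c) monoid_scheme \<Rightarrow>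
   (('m set set \<times> 'm set set \<Rightarrow>\<^sub>0 int) set \<Rightarrow> 'l) \<Rightarrow> ('l \<Rightarrow> 'm) \<Rightarrow> ('m \<Rightarrow> 'n) \<Rightarrow>
   ('n \<Rightarrow> 'm \<Rightarrow> 'm) \<Rightarrow> ('n \<Rightarrow> 'l \<Rightarrow> 'l) \<Rightarrow> bool"
  where "quadratic_module L M N \<omega> \<delta> d actM actL \<longleftrightarrow>
    (let C = Cgrp M d actM; T = tensor C; b = bar M d actM; w = peiffer M d actM in
     \<comment> \<open>QM1\<close>
     nil2_module M N d actM \<and>
     (\<exists>wm. wm \<in> hom T M \<and> (\<forall>x\<in>carrier M. \<forall>y\<in>carrier M. wm (tens C (b x) (b y)) = w x y)) \<and>
     \<comment> \<open>QM2 (and the types of omega, delta)\<close>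
     group L \<and> \<omega> \<in> hom T L \<and> \<delta> \<in> hom L M \<and>
     (\<forall>a\<in>carrier L. d (\<delta> a) = \<one>\<^bsub>N\<^esub>) \<and>
     (\<forall>x\<in>carrier M. \<forall>y\<in>carrier M. \<delta> (\<omega> (tens C (b x) (b y))) = w x y) \<and>
     \<comment> \<open>QM3: L is an N-group, maps N-equivariant (action on C\<otimes>C induced from M,
        stated on the generating elementary tensors)\<close>
     aut_action N L actL \<and>
     (\<forall>n\<in>carrier N. \<forall>x\<in>carrier M. \<forall>y\<in>carrier M.
        \<omega> (tens C (b (actM n x)) (b (actM n y))) = actL n (\<omega> (tens C (b x) (b y)))) \<and>
     (\<forall>n\<in>carrier N. \<forall>a\<in>carrier L. \<delta> (actL n a) = actM n (\<delta> a)) \<and>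
     (\<forall>a\<in>carrier L. \<forall>x\<in>carrier M.
        actL (d x) a = \<omega> (tens C (b x) (b (\<delta> a)) \<otimes>\<^bsub>T\<^esub> tens C (b (\<delta> a)) (b x)) \<otimes>\<^bsub>L\<^esub> a) \<and>
     \<comment> \<open>QM4\<close>
     (\<forall>a\<in>carrier L. \<forall>c\<in>carrier L. \<omega> (tens C (b (\<delta> a)) (b (\<delta> c))) = commutator L c a))"

definition two_crossed_module ::
  "('c2,'a) monoid_scheme \<Rightarrow> ('c1,'b) monoid_scheme \<Rightarrow> ('c0,'c) monoid_scheme \<Rightarrow>
   ('c2 \<Rightarrow> 'c1) \<Rightarrow> ('c1 \<Rightarrow> 'c0) \<Rightarrow> ('c0 \<Rightarrow> 'c1 \<Rightarrow> 'c1) \<Rightarrow> ('c0 \<Rightarrow> 'c2 \<Rightarrow> 'c2) \<Rightarrow>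
   ('c1 \<Rightarrow> 'c1 \<Rightarrow> 'c2) \<Rightarrow> bool"
  where "two_crossed_module C2 C1 C0 d2 d1 a1 a2 pf \<longleftrightarrow>
    (let xact = (\<lambda>x l. pf (d2 l) x \<otimes>\<^bsub>C2\<^esub> l) in
     group C2 \<and> group C1 \<and> group C0 \<and>
     d2 \<in> hom C2 C1 \<and> d1 \<in> hom C1 C0 \<and> (\<forall>l\<in>carrier C2. d1 (d2 l) = \<one>\<^bsub>C0\<^esub>) \<and>
     aut_action C0 C1 a1 \<and> aut_action C0 C2 a2 \<and>
     (\<forall>n\<in>carrier C0. \<forall>l\<in>carrier C2. d2 (a2 n l) = a1 n (d2 l)) \<and>
     (\<forall>n\<in>carrier C0. \<forall>m\<in>carrier C1. d1 (a1 n m) = n \<otimes>\<^bsub>C0\<^esub> d1 m \<otimes>\<^bsub>C0\<^esub> inv\<^bsub>C0\<^esub> n) \<and>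
     (\<forall>m\<in>carrier C1. \<forall>m'\<in>carrier C1. pf m m' \<in> carrier C2) \<and>
     \<comment> \<open>2CM1\<close>
     (\<forall>m\<in>carrier C1. \<forall>m'\<in>carrier C1.
        d2 (pf m m') = a1 (d1 m) m' \<otimes>\<^bsub>C1\<^esub> m \<otimes>\<^bsub>C1\<^esub> inv\<^bsub>C1\<^esub> m' \<otimes>\<^bsub>C1\<^esub> inv\<^bsub>C1\<^esub> m) \<and>
     \<comment> \<open>2CM2\<close>
     (\<forall>l\<in>carrier C2. \<forall>l'\<in>carrier C2. pf (d2 l) (d2 l') = commutator C2 l' l) \<and>
     \<comment> \<open>2CM3 (i)\<close>
     (\<forall>m\<in>carrier C1. \<forall>m'\<in>carrier C1. \<forall>m''\<in>carrier C1.
        pf (m \<otimes>\<^bsub>C1\<^esub> m') m'' =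
          a2 (d1 m) (pf m' m'') \<otimes>\<^bsub>C2\<^esub> pf m (m' \<otimes>\<^bsub>C1\<^esub> m'' \<otimes>\<^bsub>C1\<^esub> inv\<^bsub>C1\<^esub> m')) \<and>
     \<comment> \<open>2CM3 (ii)\<close>
     (\<forall>m\<in>carrier C1. \<forall>m'\<in>carrier C1. \<forall>m''\<in>carrier C1.
        pf m (m' \<otimes>\<^bsub>C1\<^esub> m'') =
          pf m m' \<otimes>\<^bsub>C2\<^esub> xact (m \<otimes>\<^bsub>C1\<^esub> m' \<otimes>\<^bsub>C1\<^esub> inv\<^bsub>C1\<^esub> m) (pf m m'')) \<and>
     \<comment> \<open>2CM4\<close>
     (\<forall>m\<in>carrier C1. \<forall>l\<in>carrier C2.
        pf m (d2 l) \<otimes>\<^bsub>C2\<^esub> pf (d2 l) m = a2 (d1 m) l \<otimes>\<^bsub>C2\<^esub> inv\<^bsub>C2\<^esub> l) \<and>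
     \<comment> \<open>2CM5\<close>
     (\<forall>n\<in>carrier C0. \<forall>m\<in>carrier C1. \<forall>m'\<in>carrier C1.
        a2 n (pf m m') = pf (a1 n m) (a1 n m')))"

definition P3' :: "('c2,'a) monoid_scheme \<Rightarrow> ('c1,'b) monoid_scheme \<Rightarrow> ('c1 \<Rightarrow> 'c0) \<Rightarrow>
   ('c0 \<Rightarrow> 'c1 \<Rightarrow> 'c1) \<Rightarrow> ('c1 \<Rightarrow> 'c1 \<Rightarrow> 'c2) \<Rightarrow> 'c2 set"
  where "P3' C2 C1 d1 a1 pf = generate C2
     ({pf (peiffer C1 d1 a1 x y) z | x y z. x \<in> carrier C1 \<and> y \<in> carrier C1 \<and> z \<in> carrier C1}
      \<union> {pf x (peiffer C1 d1 a1 y z) | x y z. x \<in> carrier C1 \<and> y \<in> carrier C1 \<and> z \<in> carrier C1})"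

end

theory Submission
  imports Defs
begin


lemma normal_generateI':
  fixes G (structure)
  assumes G: "group G" and HG: "H \<subseteq> carrier G"
  and conj: "\<And>h g. h \<in> H \<Longrightarrow> g \<in> carrier G \<Longrightarrow> g \<otimes>\<^bsub>G\<^esub> h \<otimes>\<^bsub>G\<^esub> inv\<^bsub>G\<^esub> g \<in> generate G H"
  shows "generate G H \<lhd> G"
proof -
  interpret group G by fact
  show ?thesis
  proof (rule normal_invI[OF generate_is_subgroup[OF HG]])
    fix g h assume g: "g \<in> carrier G" show "h \<in> generate G H \<Longrightarrow> g \<otimes> h \<otimes> (inv g) \<in> generate G H"
    proof (induct h rule: generate.induct)
      case one thus ?case
        using g generate.one by auto
    next
      case incl show ?case
        using conj[OF incl g] .
    next
      case (inv h)
      hence h: "h \<in> carrier G"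
        using HG by auto
      hence "inv (g \<otimes> h \<otimes> (inv g)) = g \<otimes> (inv h) \<otimes> (inv g)"
        using g by (simp add: inv_mult_group m_assoc)
      thus ?case
        using generate_m_inv_closed[OF HG conj[OF inv g]] by simp
    next
      case (eng h1 h2)
      note in_carrier = eng(1,3)[THEN generate_in_carrier[OF HG]]
      have "g \<otimes> (h1 \<otimes> h2) \<otimes> inv g = (g \<otimes> h1 \<otimes> inv g) \<otimes> (g \<otimes> h2 \<otimes> inv g)"
        using in_carrier g by (simp add: inv_solve_left m_assoc)
      thus ?case
        using generate.eng[OF eng(2,4)] by simp
    qed
  qed
qed

lemma factor_hom:
  assumes N: "N \<lhd> G" and H: "group H" and h: "h \<in> hom G H"
    and triv: "\<And>n. n \<in> N \<Longrightarrow> h n = \<one>\<^bsub>H\<^esub>"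
  shows "(\<lambda>X. the_elem (h ` X)) \<in> hom (G Mod N) H"
    and "\<And>x. x \<in> carrier G \<Longrightarrow> the_elem (h ` (N #>\<^bsub>G\<^esub> x)) = h x"
proof -
  interpret normal N G by fact
  interpret Hg: group H by fact
  have img: "h ` (N #>\<^bsub>G\<^esub> x) = {h x}" if x: "x \<in> carrier G" for x
  proof -
    have e1: "N #>\<^bsub>G\<^esub> x = (\<lambda>n. n \<otimes>\<^bsub>G\<^esub> x) ` N"
      unfolding r_coset_def by auto
    have "h ` (N #>\<^bsub>G\<^esub> x) = (\<lambda>n. h n \<otimes>\<^bsub>H\<^esub> h x) ` N"
      unfolding e1 image_image
    proof (rule image_cong[OF refl])
      fix n assume "n \<in> N" then show "h (n \<otimes>\<^bsub>G\<^esub> x) = h n \<otimes>\<^bsub>H\<^esub> h x"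
        using x subset hom_mult[OF h] by auto
    qed
    also have "\<dots> = {h x}"
    proof -
      have "\<forall>n\<in>N. h n \<otimes>\<^bsub>H\<^esub> h x = h x" using triv hom_in_carrier[OF h x] by simp
      moreover have "\<one>\<^bsub>G\<^esub> \<in> N" by (rule subgroup.one_closed[OF normal_imp_subgroup[OF N]])
      ultimately show ?thesis
        by (metis (no_types, lifting) image_cong image_constant)
    qed
    finally show ?thesis .
  qed
  show ev: "the_elem (h ` (N #>\<^bsub>G\<^esub> x)) = h x" if "x \<in> carrier G" for x
    using img[OF that] by simp
  show "(\<lambda>X. the_elem (h ` X)) \<in> hom (G Mod N) H"
  proof (rule homI)
    fix X assume "X \<in> carrier (G Mod N)"
    then obtain x where x: "x \<in> carrier G" "X = N #>\<^bsub>G\<^esub> x" by (auto simp: carrier_FactGroup)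
    show "the_elem (h ` X) \<in> carrier H" using x ev hom_in_carrier[OF h] by simp
  next
    fix X Y assume "X \<in> carrier (G Mod N)" "Y \<in> carrier (G Mod N)"
    then obtain x y where x: "x \<in> carrier G" "X = N #>\<^bsub>G\<^esub> x" and y: "y \<in> carrier G" "Y = N #>\<^bsub>G\<^esub> y"
      by (auto simp: carrier_FactGroup)
    show "the_elem (h ` (X \<otimes>\<^bsub>G Mod N\<^esub> Y)) = the_elem (h ` X) \<otimes>\<^bsub>H\<^esub> the_elem (h ` Y)"
      using x y by (simp add: rcos_sum ev hom_mult[OF h])
  qed
qed

lemma comm_inv:
  fixes G (structure)
  assumes G: "group G" and ab: "a \<in> carrier G" "b \<in> carrier G" and c: "a \<otimes> b = b \<otimes> a"
  shows "inv a \<otimes> b = b \<otimes> inv a"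
proof -
  interpret group G by fact
  have "inv a \<otimes> b = inv a \<otimes> (b \<otimes> a) \<otimes> inv a" using ab by (simp add: m_assoc)
  also have "\<dots> = inv a \<otimes> (a \<otimes> b) \<otimes> inv a" using c by simp
  also have "\<dots> = b \<otimes> inv a" using ab by (simp add: m_assoc[symmetric])
  finally show ?thesis .
qed

lemma comm_mult:
  fixes G (structure)
  assumes G: "group G" and ab: "a \<in> carrier G" "b \<in> carrier G" "s \<in> carrier G"
    and c: "a \<otimes> s = s \<otimes> a" "b \<otimes> s = s \<otimes> b"
  shows "a \<otimes> b \<otimes> s = s \<otimes> (a \<otimes> b)"
proof -
  interpret group G by fact
  have "a \<otimes> b \<otimes> s = a \<otimes> (b \<otimes> s)" using ab by (simp add: m_assoc)
  also have "\<dots> = a \<otimes> (s \<otimes> b)" using c by simp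
  also have "\<dots> = (a \<otimes> s) \<otimes> b" using ab by (simp add: m_assoc)
  also have "\<dots> = (s \<otimes> a) \<otimes> b" using c by simp
  also have "\<dots> = s \<otimes> (a \<otimes> b)" using ab by (simp add: m_assoc)
  finally show ?thesis .
qed

lemma comm_group_generated:
  fixes G (structure)
  assumes G: "group G" and S: "S \<subseteq> carrier G"
    and c: "\<And>a b. a \<in> S \<Longrightarrow> b \<in> S \<Longrightarrow> a \<otimes>\<^bsub>G\<^esub> b = b \<otimes>\<^bsub>G\<^esub> a"
  shows "comm_group (subgroup_generated G S)"
proof -
  interpret group G by fact
  have gS: "generate G (carrier G \<inter> S) = generate G S" using S by (simp add: Int_absorb1)
  have c1: "x \<otimes> s = s \<otimes> x" if "x \<in> generate G S" "s \<in> S" for x s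
    using that(1)
  proof (induct x rule: generate.induct)
    case one then show ?case using S that(2) by auto
  next
    case (incl h) then show ?case using c that(2) by auto
  next
    case (inv h)
    have h: "h \<in> carrier G" "s \<in> carrier G" using inv S that(2) by auto
    have "h \<otimes> s = s \<otimes> h" using c inv that(2) by auto
    then show ?case using comm_inv[OF G h] by simp
  next
    case (eng h1 h2)
    have "h1 \<in> carrier G" "h2 \<in> carrier G" "s \<in> carrier G"
      using eng generate_in_carrier[OF S] S that(2) by auto
    then show ?case using eng comm_mult[OF G] by simp
  qed
  have c2: "x \<otimes> y = y \<otimes> x" if "x \<in> generate G S" "y \<in> generate G S" for x y
    using that(2)
  proof (induct y rule: generate.induct)
    case one then show ?case using generate_in_carrier[OF S that(1)] by auto
  next
    case (incl h) then show ?case using c1 that(1) by auto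
  next
    case (inv h)
    have h: "h \<in> carrier G" "x \<in> carrier G" using inv S generate_in_carrier[OF S that(1)] by auto
    have "h \<otimes> x = x \<otimes> h" using c1 inv that(1) by auto
    then show ?case using comm_inv[OF G h] by simp
  next
    case (eng h1 h2)
    have "h1 \<in> carrier G" "h2 \<in> carrier G" "x \<in> carrier G"
      using eng generate_in_carrier[OF S] that(1) by auto
    then show ?case using eng comm_mult[OF G] by metis
  qed
  show ?thesis
  proof (rule group.group_comm_groupI)
    show "group (subgroup_generated G S)" by simp
    fix x y assume "x \<in> carrier (subgroup_generated G S)" "y \<in> carrier (subgroup_generated G S)"
    then show "x \<otimes>\<^bsub>subgroup_generated G S\<^esub> y = y \<otimes>\<^bsub>subgroup_generated G S\<^esub> x"
      using c2 by (simp add: carrier_subgroup_generated gS)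
  qed
qed

lemma hom_generated_to_G:
  assumes "group G" "h \<in> hom K (subgroup_generated G S)"
  shows "h \<in> hom K G"
proof -
  interpret group G by fact
  have "carrier (subgroup_generated G S) \<subseteq> carrier G"
    by (simp add: carrier_subgroup_generated generate_incl)
  then show ?thesis using assms(2) unfolding hom_def by auto
qed

lemma rcos_eq_iff:
  assumes "subgroup N G" "group G" "x \<in> carrier G" "y \<in> carrier G"
  shows "(N #>\<^bsub>G\<^esub> x = N #>\<^bsub>G\<^esub> y) \<longleftrightarrow> x \<otimes>\<^bsub>G\<^esub> inv\<^bsub>G\<^esub> y \<in> N"
  using assms
  by (metis group.repr_independence group.repr_independenceD subgroup.rcos_module)


locale pcm =
  fixes M :: "('m,'a) monoid_scheme" and N :: "('n,'b) monoid_scheme"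
    and d :: "'m \<Rightarrow> 'n" and act :: "'n \<Rightarrow> 'm \<Rightarrow> 'm"
  assumes pcm: "pre_crossed_module M N d act"
begin

lemma grpM: "group M" and grpN: "group N" and d_hom: "d \<in> hom M N"
  and act_hom: "n \<in> carrier N \<Longrightarrow> act n \<in> hom M M"
  and act_one: "x \<in> carrier M \<Longrightarrow> act \<one>\<^bsub>N\<^esub> x = x"
  and act_mult: "n \<in> carrier N \<Longrightarrow> n' \<in> carrier N \<Longrightarrow> x \<in> carrier M \<Longrightarrow> act (n \<otimes>\<^bsub>N\<^esub> n') x = act n (act n' x)"
  and d_act: "n \<in> carrier N \<Longrightarrow> x \<in> carrier M \<Longrightarrow> d (act n x) = n \<otimes>\<^bsub>N\<^esub> d x \<otimes>\<^bsub>N\<^esub> inv\<^bsub>N\<^esub> n"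
  using pcm unfolding pre_crossed_module_def aut_action_def by auto

sublocale Mg: group M by (rule grpM)
sublocale Ng: group N by (rule grpN)
sublocale dh: group_hom M N d by (simp add: group_hom_def group_hom_axioms_def grpM grpN d_hom)

lemma act_gh: "n \<in> carrier N \<Longrightarrow> group_hom M M (act n)"
  by (simp add: group_hom_def group_hom_axioms_def grpM act_hom)

lemma act_closed[simp]: "n \<in> carrier N \<Longrightarrow> x \<in> carrier M \<Longrightarrow> act n x \<in> carrier M"
  by (rule hom_in_carrier[OF act_hom])

lemma act_m[simp]: "n \<in> carrier N \<Longrightarrow> x \<in> carrier M \<Longrightarrow> y \<in> carrier M \<Longrightarrow> act n (x \<otimes>\<^bsub>M\<^esub> y) = act n x \<otimes>\<^bsub>M\<^esub> act n y"
  by (rule hom_mult[OF act_hom])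

lemma act_inv[simp]: "n \<in> carrier N \<Longrightarrow> x \<in> carrier M \<Longrightarrow> act n (inv\<^bsub>M\<^esub> x) = inv\<^bsub>M\<^esub> (act n x)"
  by (rule group_hom.hom_inv[OF act_gh])

abbreviation "pw \<equiv> peiffer M d act"

lemma peiffer_closed[simp]: "x \<in> carrier M \<Longrightarrow> y \<in> carrier M \<Longrightarrow> pw x y \<in> carrier M"
  unfolding peiffer_def by simp

lemma peiffer_act: "n \<in> carrier N \<Longrightarrow> x \<in> carrier M \<Longrightarrow> y \<in> carrier M \<Longrightarrow> act n (pw x y) = pw (act n x) (act n y)"
proof -
  assume n: "n \<in> carrier N" and x: "x \<in> carrier M" and y: "y \<in> carrier M"
  have "act n (act (d x) y) = act (n \<otimes>\<^bsub>N\<^esub> d x) y" using n x y by (simp add: act_mult)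
  also have "\<dots> = act (n \<otimes>\<^bsub>N\<^esub> d x \<otimes>\<^bsub>N\<^esub> inv\<^bsub>N\<^esub> n \<otimes>\<^bsub>N\<^esub> n) y"
    using n x by (simp add: Ng.m_assoc)
  also have "\<dots> = act (d (act n x)) (act n y)" using n x y by (simp add: act_mult d_act)
  finally have e: "act n (act (d x) y) = act (d (act n x)) (act n y)" .
  show ?thesis unfolding peiffer_def using n x y e by simp
qed

lemma peiffer_conj: "g \<in> carrier M \<Longrightarrow> z \<in> carrier M \<Longrightarrow>
   g \<otimes>\<^bsub>M\<^esub> z \<otimes>\<^bsub>M\<^esub> inv\<^bsub>M\<^esub> g = inv\<^bsub>M\<^esub> (pw g z) \<otimes>\<^bsub>M\<^esub> act (d g) z"
  unfolding peiffer_def by (simp add: Mg.m_assoc Mg.inv_mult_group)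

lemma d_peiffer: "x \<in> carrier M \<Longrightarrow> y \<in> carrier M \<Longrightarrow> d (pw x y) = \<one>\<^bsub>N\<^esub>"
  unfolding peiffer_def by (simp add: d_act Ng.m_assoc)

definition S2 where "S2 = {pw x y | x y. x \<in> carrier M \<and> y \<in> carrier M}"
definition S3 where "S3 = {pw (pw x y) z | x y z. x \<in> carrier M \<and> y \<in> carrier M \<and> z \<in> carrier M}
      \<union> {pw x (pw y z) | x y z. x \<in> carrier M \<and> y \<in> carrier M \<and> z \<in> carrier M}"

lemma P2_eq: "P2 M d act = generate M S2" unfolding P2_def S2_def ..
lemma P3_eq: "P3 M d act = generate M S3" unfolding P3_def S3_def ..

lemma S2I: "x \<in> carrier M \<Longrightarrow> y \<in> carrier M \<Longrightarrow> pw x y \<in> S2"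
  unfolding S2_def by blast
lemma S3I1: "x \<in> carrier M \<Longrightarrow> y \<in> carrier M \<Longrightarrow> z \<in> carrier M \<Longrightarrow> pw (pw x y) z \<in> S3"
  unfolding S3_def by blast
lemma S3I2: "x \<in> carrier M \<Longrightarrow> y \<in> carrier M \<Longrightarrow> z \<in> carrier M \<Longrightarrow> pw x (pw y z) \<in> S3"
  unfolding S3_def by blast
lemma S2E: "h \<in> S2 \<Longrightarrow> (\<And>x y. x \<in> carrier M \<Longrightarrow> y \<in> carrier M \<Longrightarrow> h = pw x y \<Longrightarrow> Q) \<Longrightarrow> Q"
  unfolding S2_def by blast
lemma S3E: "h \<in> S3 \<Longrightarrow> (\<And>x y z. x \<in> carrier M \<Longrightarrow> y \<in> carrier M \<Longrightarrow> z \<in> carrier M \<Longrightarrow> h = pw (pw x y) z \<Longrightarrow> Q)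
   \<Longrightarrow> (\<And>x y z. x \<in> carrier M \<Longrightarrow> y \<in> carrier M \<Longrightarrow> z \<in> carrier M \<Longrightarrow> h = pw x (pw y z) \<Longrightarrow> Q) \<Longrightarrow> Q"
  unfolding S3_def by blast

lemma S2_sub: "S2 \<subseteq> carrier M" by (auto elim: S2E)
lemma S3_sub: "S3 \<subseteq> carrier M" by (auto elim: S3E)
lemma S3_S2: "S3 \<subseteq> S2" by (auto elim!: S3E intro!: S2I)

lemma P3_sub_P2: "P3 M d act \<subseteq> P2 M d act"
  unfolding P2_eq P3_eq by (rule Mg.mono_generate[OF S3_S2])

lemma P2_normal: "P2 M d act \<lhd> M"
  unfolding P2_eq
proof (rule normal_generateI'[OF grpM S2_sub])
  fix h g assume h: "h \<in> S2" and g: "g \<in> carrier M"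
  then obtain x y where xy: "x \<in> carrier M" "y \<in> carrier M" "h = pw x y" by (auto elim: S2E)
  have "g \<otimes>\<^bsub>M\<^esub> h \<otimes>\<^bsub>M\<^esub> inv\<^bsub>M\<^esub> g = inv\<^bsub>M\<^esub> (pw g h) \<otimes>\<^bsub>M\<^esub> act (d g) h"
    using peiffer_conj g xy by simp
  moreover have "inv\<^bsub>M\<^esub> (pw g h) \<in> generate M S2"
    by (rule generate.inv) (use g xy in \<open>simp add: S2I\<close>)
  moreover have "act (d g) h \<in> generate M S2"
  proof (rule generate.incl)
    have "act (d g) h = pw (act (d g) x) (act (d g) y)" using g xy by (simp add: peiffer_act)
    then show "act (d g) h \<in> S2" using g xy by (simp add: S2I)
  qed
  ultimately show "g \<otimes>\<^bsub>M\<^esub> h \<otimes>\<^bsub>M\<^esub> inv\<^bsub>M\<^esub> g \<in> generate M S2"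
    by (simp add: generate.eng)
qed

lemma act_S3': "n \<in> carrier N \<Longrightarrow> h \<in> S3 \<Longrightarrow> act n h \<in> S3"
  by (erule S3E) (simp_all add: peiffer_act S3I1 S3I2)

lemma pf_S3: "g \<in> carrier M \<Longrightarrow> h \<in> S3 \<Longrightarrow> pw g h \<in> S3"
  by (erule S3E) (simp_all add: S3I2)

lemma P3_normal: "P3 M d act \<lhd> M"
  unfolding P3_eq
proof (rule normal_generateI'[OF grpM S3_sub])
  fix h g assume h: "h \<in> S3" and g: "g \<in> carrier M"
  have hc: "h \<in> carrier M" using h S3_sub by auto
  have "g \<otimes>\<^bsub>M\<^esub> h \<otimes>\<^bsub>M\<^esub> inv\<^bsub>M\<^esub> g = inv\<^bsub>M\<^esub> (pw g h) \<otimes>\<^bsub>M\<^esub> act (d g) h"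
    using peiffer_conj g hc by simp
  moreover have "inv\<^bsub>M\<^esub> (pw g h) \<in> generate M S3" by (rule generate.inv[OF pf_S3[OF g h]])
  moreover have "act (d g) h \<in> generate M S3" by (rule generate.incl[OF act_S3']) (use g h in simp_all)
  ultimately show "g \<otimes>\<^bsub>M\<^esub> h \<otimes>\<^bsub>M\<^esub> inv\<^bsub>M\<^esub> g \<in> generate M S3"
    by (simp add: generate.eng)
qed

lemma act_S3: "n \<in> carrier N \<Longrightarrow> act n ` S3 \<subseteq> S3"
  using act_S3' by auto

lemma act_P3_sub: "n \<in> carrier N \<Longrightarrow> act n ` P3 M d act \<subseteq> P3 M d act"
  unfolding P3_eq
  using group_hom.generate_img[OF act_gh S3_sub, symmetric] Mg.mono_generate[OF act_S3] by metis

lemma P3_carrier: "P3 M d act \<subseteq> carrier M" unfolding P3_eq by (rule Mg.generate_incl[OF S3_sub])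
lemma P2_carrier: "P2 M d act \<subseteq> carrier M" unfolding P2_eq by (rule Mg.generate_incl[OF S2_sub])

lemma act_P3: "n \<in> carrier N \<Longrightarrow> act n ` P3 M d act = P3 M d act"
proof
  assume n: "n \<in> carrier N"
  show "act n ` P3 M d act \<subseteq> P3 M d act" using act_P3_sub[OF n] .
  show "P3 M d act \<subseteq> act n ` P3 M d act"
  proof
    fix u assume u: "u \<in> P3 M d act"
    have "act n (act (inv\<^bsub>N\<^esub> n) u) = u"
      using u P3_carrier n act_mult[of n "inv\<^bsub>N\<^esub> n" u, symmetric] by (auto simp add: act_one)
    moreover have "act (inv\<^bsub>N\<^esub> n) u \<in> P3 M d act" using act_P3_sub[of "inv\<^bsub>N\<^esub> n"] n u by auto
    ultimately show "u \<in> act n ` P3 M d act" by (metis image_eqI)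
  qed
qed

lemma d_P2: "x \<in> P2 M d act \<Longrightarrow> d x = \<one>\<^bsub>N\<^esub>"
proof -
  have "P2 M d act \<subseteq> kernel M N d"
    unfolding P2_eq
    by (rule Mg.generate_subgroup_incl[OF _ dh.subgroup_kernel]) (auto elim!: S2E simp: kernel_def d_peiffer)
  then show "x \<in> P2 M d act \<Longrightarrow> d x = \<one>\<^bsub>N\<^esub>" by (auto simp: kernel_def)
qed

end


lemma hom_image_rcos:
  assumes f: "f \<in> hom G H" and K: "K \<subseteq> carrier G" and x: "x \<in> carrier G"
  shows "f ` (K #>\<^bsub>G\<^esub> x) = (f ` K) #>\<^bsub>H\<^esub> f x"
proof -
  have e1: "K #>\<^bsub>G\<^esub> x = (\<lambda>n. n \<otimes>\<^bsub>G\<^esub> x) ` K" unfolding r_coset_def by auto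
  have e2: "(f ` K) #>\<^bsub>H\<^esub> f x = (\<lambda>n. n \<otimes>\<^bsub>H\<^esub> f x) ` (f ` K)" unfolding r_coset_def by auto
  show ?thesis unfolding e1 e2 image_image
  proof (rule image_cong[OF refl])
    fix n assume "n \<in> K" then show "f (n \<otimes>\<^bsub>G\<^esub> x) = f n \<otimes>\<^bsub>H\<^esub> f x"
      using x K hom_mult[OF f] by auto
  qed
qed

lemma aut_action_gen:
  assumes G: "group G" and A: "aut_action N G act" and N: "group N" and S: "S \<subseteq> carrier G"
    and inv: "\<And>n. n \<in> carrier N \<Longrightarrow> act n ` S \<subseteq> S" and n: "n \<in> carrier N"
  shows "act n ` generate G S = generate G S"
proof -
  interpret G: group G by fact
  interpret N: group N by fact
  have sub: "act m ` generate G S \<subseteq> generate G S" if m: "m \<in> carrier N" for m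
  proof -
    have "group_hom G G (act m)" using A m G unfolding aut_action_def group_hom_def group_hom_axioms_def by auto
    then show ?thesis using group_hom.generate_img[OF _ S, symmetric] G.mono_generate[OF inv[OF m]] by metis
  qed
  show ?thesis
  proof
    show "act n ` generate G S \<subseteq> generate G S" by (rule sub[OF n])
    show "generate G S \<subseteq> act n ` generate G S"
    proof
      fix u assume u: "u \<in> generate G S"
      have uc: "u \<in> carrier G" using u G.generate_incl[OF S] by auto
      have "act n (act (inv\<^bsub>N\<^esub> n) u) = u"
        using A uc n unfolding aut_action_def by (metis N.inv_closed N.r_inv)
      moreover have "act (inv\<^bsub>N\<^esub> n) u \<in> generate G S" using sub[of "inv\<^bsub>N\<^esub> n"] n u by auto
      ultimately show "u \<in> act n ` generate G S" by (metis image_eqI)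
    qed
  qed
qed

locale tcm =
  fixes C2 :: "('c2,'a) monoid_scheme" and C1 :: "('c1,'b) monoid_scheme"
    and C0 :: "('c0,'c) monoid_scheme"
    and d2 :: "'c2 \<Rightarrow> 'c1" and d1 :: "'c1 \<Rightarrow> 'c0"
    and a1 :: "'c0 \<Rightarrow> 'c1 \<Rightarrow> 'c1" and a2 :: "'c0 \<Rightarrow> 'c2 \<Rightarrow> 'c2"
    and pf :: "'c1 \<Rightarrow> 'c1 \<Rightarrow> 'c2"
  assumes X: "two_crossed_module C2 C1 C0 d2 d1 a1 a2 pf"
begin

abbreviation "w \<equiv> peiffer C1 d1 a1"

lemma X': "group C2 \<and> group C1 \<and> group C0 \<and>
     d2 \<in> hom C2 C1 \<and> d1 \<in> hom C1 C0 \<and> (\<forall>l\<in>carrier C2. d1 (d2 l) = \<one>\<^bsub>C0\<^esub>) \<and>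
     aut_action C0 C1 a1 \<and> aut_action C0 C2 a2 \<and>
     (\<forall>n\<in>carrier C0. \<forall>l\<in>carrier C2. d2 (a2 n l) = a1 n (d2 l)) \<and>
     (\<forall>n\<in>carrier C0. \<forall>m\<in>carrier C1. d1 (a1 n m) = n \<otimes>\<^bsub>C0\<^esub> d1 m \<otimes>\<^bsub>C0\<^esub> inv\<^bsub>C0\<^esub> n) \<and>
     (\<forall>m\<in>carrier C1. \<forall>m'\<in>carrier C1. pf m m' \<in> carrier C2) \<and>
     (\<forall>m\<in>carrier C1. \<forall>m'\<in>carrier C1. d2 (pf m m') = w m m') \<and>
     (\<forall>l\<in>carrier C2. \<forall>l'\<in>carrier C2. pf (d2 l) (d2 l') = commutator C2 l' l) \<and>
     (\<forall>m\<in>carrier C1. \<forall>m'\<in>carrier C1. \<forall>m''\<in>carrier C1.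
        pf (m \<otimes>\<^bsub>C1\<^esub> m') m'' =
          a2 (d1 m) (pf m' m'') \<otimes>\<^bsub>C2\<^esub> pf m (m' \<otimes>\<^bsub>C1\<^esub> m'' \<otimes>\<^bsub>C1\<^esub> inv\<^bsub>C1\<^esub> m')) \<and>
     (\<forall>m\<in>carrier C1. \<forall>m'\<in>carrier C1. \<forall>m''\<in>carrier C1.
        pf m (m' \<otimes>\<^bsub>C1\<^esub> m'') =
          pf m m' \<otimes>\<^bsub>C2\<^esub> (pf (d2 (pf m m'')) (m \<otimes>\<^bsub>C1\<^esub> m' \<otimes>\<^bsub>C1\<^esub> inv\<^bsub>C1\<^esub> m) \<otimes>\<^bsub>C2\<^esub> pf m m'')) \<and>
     (\<forall>m\<in>carrier C1. \<forall>l\<in>carrier C2.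
        pf m (d2 l) \<otimes>\<^bsub>C2\<^esub> pf (d2 l) m = a2 (d1 m) l \<otimes>\<^bsub>C2\<^esub> inv\<^bsub>C2\<^esub> l) \<and>
     (\<forall>n\<in>carrier C0. \<forall>m\<in>carrier C1. \<forall>m'\<in>carrier C1.
        a2 n (pf m m') = pf (a1 n m) (a1 n m'))"
  using X unfolding two_crossed_module_def Let_def peiffer_def by simp

lemma grp2: "group C2"
  using X'[THEN conjunct1] by blast

lemma grp1: "group C1"
  using X'[THEN conjunct2, THEN conjunct1] by blast

lemma grp0: "group C0"
  using X'[THEN conjunct2, THEN conjunct2, THEN conjunct1] by blast

lemma d2_hom: "d2 \<in> hom C2 C1"
  using X'[THEN conjunct2, THEN conjunct2, THEN conjunct2, THEN conjunct1] by blast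

lemma d1_hom: "d1 \<in> hom C1 C0"
  using X'[THEN conjunct2, THEN conjunct2, THEN conjunct2, THEN conjunct2, THEN conjunct1] by blast

lemma d1d2: "l \<in> carrier C2 \<Longrightarrow> d1 (d2 l) = \<one>\<^bsub>C0\<^esub>"
  using X'[THEN conjunct2, THEN conjunct2, THEN conjunct2, THEN conjunct2, THEN conjunct2, THEN conjunct1] by blast

lemma aut1: "aut_action C0 C1 a1"
  using X'[THEN conjunct2, THEN conjunct2, THEN conjunct2, THEN conjunct2, THEN conjunct2, THEN conjunct2, THEN conjunct1] by blast

lemma aut2: "aut_action C0 C2 a2"
  using X'[THEN conjunct2, THEN conjunct2, THEN conjunct2, THEN conjunct2, THEN conjunct2, THEN conjunct2, THEN conjunct2, THEN conjunct1] by blast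

lemma d2_a2: "n \<in> carrier C0 \<Longrightarrow> l \<in> carrier C2 \<Longrightarrow> d2 (a2 n l) = a1 n (d2 l)"
  using X'[THEN conjunct2, THEN conjunct2, THEN conjunct2, THEN conjunct2, THEN conjunct2, THEN conjunct2, THEN conjunct2, THEN conjunct2, THEN conjunct1] by blast

lemma d1_a1: "n \<in> carrier C0 \<Longrightarrow> m \<in> carrier C1 \<Longrightarrow> d1 (a1 n m) = n \<otimes>\<^bsub>C0\<^esub> d1 m \<otimes>\<^bsub>C0\<^esub> inv\<^bsub>C0\<^esub> n"
  using X'[THEN conjunct2, THEN conjunct2, THEN conjunct2, THEN conjunct2, THEN conjunct2, THEN conjunct2, THEN conjunct2, THEN conjunct2, THEN conjunct2, THEN conjunct1] by blast

lemma pf_closed: "m \<in> carrier C1 \<Longrightarrow> m' \<in> carrier C1 \<Longrightarrow> pf m m' \<in> carrier C2"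
  using X'[THEN conjunct2, THEN conjunct2, THEN conjunct2, THEN conjunct2, THEN conjunct2, THEN conjunct2, THEN conjunct2, THEN conjunct2, THEN conjunct2, THEN conjunct2, THEN conjunct1] by blast

lemma CM1: "m \<in> carrier C1 \<Longrightarrow> m' \<in> carrier C1 \<Longrightarrow> d2 (pf m m') = w m m'"
  using X'[THEN conjunct2, THEN conjunct2, THEN conjunct2, THEN conjunct2, THEN conjunct2, THEN conjunct2, THEN conjunct2, THEN conjunct2, THEN conjunct2, THEN conjunct2, THEN conjunct2, THEN conjunct1] by blast

lemma CM2: "l \<in> carrier C2 \<Longrightarrow> l' \<in> carrier C2 \<Longrightarrow> pf (d2 l) (d2 l') = commutator C2 l' l"
  using X'[THEN conjunct2, THEN conjunct2, THEN conjunct2, THEN conjunct2, THEN conjunct2, THEN conjunct2, THEN conjunct2, THEN conjunct2, THEN conjunct2, THEN conjunct2, THEN conjunct2, THEN conjunct2, THEN conjunct1] by blast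

lemma CM3i: "m \<in> carrier C1 \<Longrightarrow> m' \<in> carrier C1 \<Longrightarrow> m'' \<in> carrier C1 \<Longrightarrow>
        pf (m \<otimes>\<^bsub>C1\<^esub> m') m'' =
          a2 (d1 m) (pf m' m'') \<otimes>\<^bsub>C2\<^esub> pf m (m' \<otimes>\<^bsub>C1\<^esub> m'' \<otimes>\<^bsub>C1\<^esub> inv\<^bsub>C1\<^esub> m')"
  using X'[THEN conjunct2, THEN conjunct2, THEN conjunct2, THEN conjunct2, THEN conjunct2, THEN conjunct2, THEN conjunct2, THEN conjunct2, THEN conjunct2, THEN conjunct2, THEN conjunct2, THEN conjunct2, THEN conjunct2, THEN conjunct1] by blast

lemma CM3ii: "m \<in> carrier C1 \<Longrightarrow> m' \<in> carrier C1 \<Longrightarrow> m'' \<in> carrier C1 \<Longrightarrow>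
        pf m (m' \<otimes>\<^bsub>C1\<^esub> m'') =
          pf m m' \<otimes>\<^bsub>C2\<^esub> (pf (d2 (pf m m'')) (m \<otimes>\<^bsub>C1\<^esub> m' \<otimes>\<^bsub>C1\<^esub> inv\<^bsub>C1\<^esub> m) \<otimes>\<^bsub>C2\<^esub> pf m m'')"
  using X'[THEN conjunct2, THEN conjunct2, THEN conjunct2, THEN conjunct2, THEN conjunct2, THEN conjunct2, THEN conjunct2, THEN conjunct2, THEN conjunct2, THEN conjunct2, THEN conjunct2, THEN conjunct2, THEN conjunct2, THEN conjunct2, THEN conjunct1] by blast

lemma CM4: "m \<in> carrier C1 \<Longrightarrow> l \<in> carrier C2 \<Longrightarrow>
        pf m (d2 l) \<otimes>\<^bsub>C2\<^esub> pf (d2 l) m = a2 (d1 m) l \<otimes>\<^bsub>C2\<^esub> inv\<^bsub>C2\<^esub> l"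
  using X'[THEN conjunct2, THEN conjunct2, THEN conjunct2, THEN conjunct2, THEN conjunct2, THEN conjunct2, THEN conjunct2, THEN conjunct2, THEN conjunct2, THEN conjunct2, THEN conjunct2, THEN conjunct2, THEN conjunct2, THEN conjunct2, THEN conjunct2, THEN conjunct1] by blast

lemma CM5: "n \<in> carrier C0 \<Longrightarrow> m \<in> carrier C1 \<Longrightarrow> m' \<in> carrier C1 \<Longrightarrow>
        a2 n (pf m m') = pf (a1 n m) (a1 n m')"
  using X'[THEN conjunct2, THEN conjunct2, THEN conjunct2, THEN conjunct2, THEN conjunct2, THEN conjunct2, THEN conjunct2, THEN conjunct2, THEN conjunct2, THEN conjunct2, THEN conjunct2, THEN conjunct2, THEN conjunct2, THEN conjunct2, THEN conjunct2, THEN conjunct2] by blast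

sublocale G2: group C2 by (rule grp2)
sublocale G1: group C1 by (rule grp1)
sublocale G0: group C0 by (rule grp0)
sublocale h2: group_hom C2 C1 d2 by (simp add: group_hom_def group_hom_axioms_def grp2 grp1 d2_hom)

sublocale P1: pcm C1 C0 d1 a1
  unfolding pcm_def pre_crossed_module_def using grp1 grp0 d1_hom aut1 d1_a1 by blast

lemma a2_hom: "n \<in> carrier C0 \<Longrightarrow> a2 n \<in> hom C2 C2"
  and a2_one: "l \<in> carrier C2 \<Longrightarrow> a2 \<one>\<^bsub>C0\<^esub> l = l"
  and a2_mult: "n \<in> carrier C0 \<Longrightarrow> n' \<in> carrier C0 \<Longrightarrow> l \<in> carrier C2 \<Longrightarrow> a2 (n \<otimes>\<^bsub>C0\<^esub> n') l = a2 n (a2 n' l)"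
  using aut2 unfolding aut_action_def by auto

lemma a2_gh: "n \<in> carrier C0 \<Longrightarrow> group_hom C2 C2 (a2 n)"
  by (simp add: group_hom_def group_hom_axioms_def grp2 a2_hom)

lemma a2_closed[simp]: "n \<in> carrier C0 \<Longrightarrow> l \<in> carrier C2 \<Longrightarrow> a2 n l \<in> carrier C2"
  by (rule hom_in_carrier[OF a2_hom])

lemma a2_m[simp]: "n \<in> carrier C0 \<Longrightarrow> x \<in> carrier C2 \<Longrightarrow> y \<in> carrier C2 \<Longrightarrow> a2 n (x \<otimes>\<^bsub>C2\<^esub> y) = a2 n x \<otimes>\<^bsub>C2\<^esub> a2 n y"
  by (rule hom_mult[OF a2_hom])

lemma a2_inv[simp]: "n \<in> carrier C0 \<Longrightarrow> x \<in> carrier C2 \<Longrightarrow> a2 n (inv\<^bsub>C2\<^esub> x) = inv\<^bsub>C2\<^esub> (a2 n x)"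
  by (rule group_hom.hom_inv[OF a2_gh])

abbreviation "P \<equiv> P3 C1 d1 a1"
abbreviation "P' \<equiv> P3' C2 C1 d1 a1 pf"
abbreviation "M \<equiv> C1 Mod P"
abbreviation "L \<equiv> C2 Mod P'"
abbreviation "q1 \<equiv> (\<lambda>x. P #>\<^bsub>C1\<^esub> x)"
abbreviation "q2 \<equiv> (\<lambda>l. P' #>\<^bsub>C2\<^esub> l)"

definition T3 where "T3 = {pf (w x y) z | x y z. x \<in> carrier C1 \<and> y \<in> carrier C1 \<and> z \<in> carrier C1}
      \<union> {pf x (w y z) | x y z. x \<in> carrier C1 \<and> y \<in> carrier C1 \<and> z \<in> carrier C1}"

lemma P'_eq: "P' = generate C2 T3" unfolding P3'_def T3_def ..

lemma T3I1: "x \<in> carrier C1 \<Longrightarrow> y \<in> carrier C1 \<Longrightarrow> z \<in> carrier C1 \<Longrightarrow> pf (w x y) z \<in> T3"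
  unfolding T3_def by blast
lemma T3I2: "x \<in> carrier C1 \<Longrightarrow> y \<in> carrier C1 \<Longrightarrow> z \<in> carrier C1 \<Longrightarrow> pf x (w y z) \<in> T3"
  unfolding T3_def by blast
lemma T3E: "h \<in> T3 \<Longrightarrow> (\<And>x y z. x \<in> carrier C1 \<Longrightarrow> y \<in> carrier C1 \<Longrightarrow> z \<in> carrier C1 \<Longrightarrow> h = pf (w x y) z \<Longrightarrow> Q)
   \<Longrightarrow> (\<And>x y z. x \<in> carrier C1 \<Longrightarrow> y \<in> carrier C1 \<Longrightarrow> z \<in> carrier C1 \<Longrightarrow> h = pf x (w y z) \<Longrightarrow> Q) \<Longrightarrow> Q"
  unfolding T3_def by blast

lemma T3_sub: "T3 \<subseteq> carrier C2" by (auto elim!: T3E simp: pf_closed)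

lemma d2_T3: "d2 ` T3 = P1.S3"
proof
  show "d2 ` T3 \<subseteq> P1.S3" by (auto elim!: T3E simp: CM1 P1.S3I1 P1.S3I2)
  show "P1.S3 \<subseteq> d2 ` T3"
  proof
    fix u assume "u \<in> P1.S3"
    then show "u \<in> d2 ` T3"
    proof (rule P1.S3E)
      fix x y z assume xyz: "x \<in> carrier C1" "y \<in> carrier C1" "z \<in> carrier C1" "u = w (w x y) z"
      then have "u = d2 (pf (w x y) z)" by (simp add: CM1)
      then show ?thesis using xyz T3I1 by blast
    next
      fix x y z assume xyz: "x \<in> carrier C1" "y \<in> carrier C1" "z \<in> carrier C1" "u = w x (w y z)"
      then have "u = d2 (pf x (w y z))" by (simp add: CM1)
      then show ?thesis using xyz T3I2 by blast
    qed
  qed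
qed

lemma d2_P': "d2 ` P' = P"
  unfolding P'_eq P1.P3_eq using h2.generate_img[OF T3_sub] d2_T3 by simp

lemma P_normal: "P \<lhd> C1" by (rule P1.P3_normal)

lemma P'_normal: "P' \<lhd> C2"
  unfolding P'_eq
proof (rule normal_generateI'[OF grp2 T3_sub])
  fix h g assume h: "h \<in> T3" and g: "g \<in> carrier C2"
  have hc: "h \<in> carrier C2" using h T3_sub by auto
  have e: "g \<otimes>\<^bsub>C2\<^esub> h \<otimes>\<^bsub>C2\<^esub> inv\<^bsub>C2\<^esub> g = pf (d2 h) (d2 g) \<otimes>\<^bsub>C2\<^esub> h"
    using CM2[OF hc g] hc g unfolding commutator_def by (simp add: G2.m_assoc)
  have "pf (d2 h) (d2 g) \<in> T3"
    using h
  proof (rule T3E)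
    fix x y z assume xyz: "x \<in> carrier C1" "y \<in> carrier C1" "z \<in> carrier C1" "h = pf (w x y) z"
    then have "d2 h = w (w x y) z" by (simp add: CM1)
    then show ?thesis using xyz g by (simp add: T3I1)
  next
    fix x y z assume xyz: "x \<in> carrier C1" "y \<in> carrier C1" "z \<in> carrier C1" "h = pf x (w y z)"
    then have "d2 h = w x (w y z)" by (simp add: CM1)
    then show ?thesis using xyz g by (simp add: T3I1)
  qed
  then show "g \<otimes>\<^bsub>C2\<^esub> h \<otimes>\<^bsub>C2\<^esub> inv\<^bsub>C2\<^esub> g \<in> generate C2 T3"
    unfolding e by (intro generate.eng generate.incl h)
qed

lemma d1_P: "d1 ` P = {\<one>\<^bsub>C0\<^esub>}"
proof -
  have "\<one>\<^bsub>C1\<^esub> \<in> P" unfolding P1.P3_eq by (rule generate.one)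
  moreover have "\<forall>x\<in>P. d1 x = \<one>\<^bsub>C0\<^esub>" using P1.d_P2 P1.P3_sub_P2 by auto
  ultimately show ?thesis by (metis (no_types, lifting) image_cong image_constant)
qed

lemma a2_T3: "n \<in> carrier C0 \<Longrightarrow> a2 n ` T3 \<subseteq> T3"
  by (auto elim!: T3E simp: CM5 P1.peiffer_act T3I1 T3I2)

lemma a2_P': "n \<in> carrier C0 \<Longrightarrow> a2 n ` P' = P'"
  unfolding P'_eq by (rule aut_action_gen[OF grp2 aut2 grp0 T3_sub a2_T3])

end


context tcm begin

lemma P_sub: "P \<subseteq> carrier C1" by (rule P1.P3_carrier)
lemma P'_sub: "P' \<subseteq> carrier C2" unfolding P'_eq by (rule G2.generate_incl[OF T3_sub])

lemma M_group: "group M" by (rule normal.factorgroup_is_group[OF P_normal])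
lemma L_group: "group L" by (rule normal.factorgroup_is_group[OF P'_normal])

lemma q1_hom: "q1 \<in> hom C1 M" by (rule normal.r_coset_hom_Mod[OF P_normal])
lemma q2_hom: "q2 \<in> hom C2 L" by (rule normal.r_coset_hom_Mod[OF P'_normal])

sublocale Mg: group M by (rule M_group)
sublocale Lg: group L by (rule L_group)
sublocale hq1: group_hom C1 M q1 by (simp add: group_hom_def group_hom_axioms_def grp1 M_group q1_hom)
sublocale hq2: group_hom C2 L q2 by (simp add: group_hom_def group_hom_axioms_def grp2 L_group q2_hom)

declare hq1.hom_mult[simp del] hq2.hom_mult[simp del] hq1.hom_inv[simp del] hq2.hom_inv[simp del]

lemma q1_mult[simp]: "x \<in> carrier C1 \<Longrightarrow> y \<in> carrier C1 \<Longrightarrow> q1 x <#>\<^bsub>C1\<^esub> q1 y = q1 (x \<otimes>\<^bsub>C1\<^esub> y)"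
  by (rule normal.rcos_sum[OF P_normal])
lemma q2_mult[simp]: "x \<in> carrier C2 \<Longrightarrow> y \<in> carrier C2 \<Longrightarrow> q2 x <#>\<^bsub>C2\<^esub> q2 y = q2 (x \<otimes>\<^bsub>C2\<^esub> y)"
  by (rule normal.rcos_sum[OF P'_normal])
lemma q1_inv[simp]: "x \<in> carrier C1 \<Longrightarrow> inv\<^bsub>M\<^esub> (q1 x) = q1 (inv\<^bsub>C1\<^esub> x)"
  by (rule hq1.hom_inv[symmetric])
lemma q2_inv[simp]: "x \<in> carrier C2 \<Longrightarrow> inv\<^bsub>L\<^esub> (q2 x) = q2 (inv\<^bsub>C2\<^esub> x)"
  by (rule hq2.hom_inv[symmetric])

lemma carrier_M: "carrier M = q1 ` carrier C1" by (rule carrier_FactGroup)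
lemma carrier_L: "carrier L = q2 ` carrier C2" by (rule carrier_FactGroup)

lemma M_cases: "X \<in> carrier M \<Longrightarrow> (\<And>x. x \<in> carrier C1 \<Longrightarrow> X = q1 x \<Longrightarrow> Q) \<Longrightarrow> Q"
  using carrier_M by auto
lemma L_cases: "X \<in> carrier L \<Longrightarrow> (\<And>x. x \<in> carrier C2 \<Longrightarrow> X = q2 x \<Longrightarrow> Q) \<Longrightarrow> Q"
  using carrier_L by auto

lemma q1_P: "p \<in> P \<Longrightarrow> q1 p = \<one>\<^bsub>M\<^esub>"
  using subgroup.rcos_const[OF normal_imp_subgroup[OF P_normal] grp1] by simp
lemma q2_P': "p \<in> P' \<Longrightarrow> q2 p = \<one>\<^bsub>L\<^esub>"
  using subgroup.rcos_const[OF normal_imp_subgroup[OF P'_normal] grp2] by simp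

definition dM where "dM X = the_elem (d1 ` X)"

lemma dM: "dM \<in> hom M C0" "x \<in> carrier C1 \<Longrightarrow> dM (q1 x) = d1 x"
proof -
  have triv: "d1 n = \<one>\<^bsub>C0\<^esub>" if "n \<in> P" for n using d1_P that by auto
  show "dM \<in> hom M C0" unfolding dM_def by (rule factor_hom(1)[OF P_normal grp0 d1_hom triv])
  show "x \<in> carrier C1 \<Longrightarrow> dM (q1 x) = d1 x" unfolding dM_def by (rule factor_hom(2)[OF P_normal grp0 d1_hom triv])
qed

definition actM where "actM n X = a1 n ` X"
definition actL where "actL n X = a2 n ` X"

lemma actM_q1: "n \<in> carrier C0 \<Longrightarrow> x \<in> carrier C1 \<Longrightarrow> actM n (q1 x) = q1 (a1 n x)"
  unfolding actM_def using hom_image_rcos[OF P1.act_hom P_sub] P1.act_P3 by simp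

lemma actL_q2: "n \<in> carrier C0 \<Longrightarrow> l \<in> carrier C2 \<Longrightarrow> actL n (q2 l) = q2 (a2 n l)"
  unfolding actL_def using hom_image_rcos[OF a2_hom P'_sub] a2_P' by simp

lemma aut_M: "aut_action C0 M actM"
  unfolding aut_action_def
proof (intro conjI ballI)
  fix n assume n: "n \<in> carrier C0"
  show "actM n \<in> hom M M"
  proof (rule homI)
    fix X assume "X \<in> carrier M"
    then obtain x where x: "x \<in> carrier C1" "X = q1 x" by (rule M_cases)
    then show "actM n X \<in> carrier M" using n by (simp add: actM_q1)
  next
    fix X Y assume "X \<in> carrier M" "Y \<in> carrier M"
    then obtain x y where x: "x \<in> carrier C1" "X = q1 x" and y: "y \<in> carrier C1" "Y = q1 y" by (metis M_cases)
    have "X \<otimes>\<^bsub>M\<^esub> Y = q1 (x \<otimes>\<^bsub>C1\<^esub> y)" using x y by simp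
    then show "actM n (X \<otimes>\<^bsub>M\<^esub> Y) = actM n X \<otimes>\<^bsub>M\<^esub> actM n Y"
      using x y n by (simp add: actM_q1)
  qed
next
  fix X assume "X \<in> carrier M"
  then obtain x where x: "x \<in> carrier C1" "X = q1 x" by (rule M_cases)
  then show "actM \<one>\<^bsub>C0\<^esub> X = X" by (simp add: actM_q1 P1.act_one)
next
  fix n n' X assume n: "n \<in> carrier C0" "n' \<in> carrier C0" and "X \<in> carrier M"
  then obtain x where x: "x \<in> carrier C1" "X = q1 x" by (metis M_cases)
  then show "actM (n \<otimes>\<^bsub>C0\<^esub> n') X = actM n (actM n' X)" using n by (simp add: actM_q1 P1.act_mult)
qed

lemma aut_L: "aut_action C0 L actL"
  unfolding aut_action_def
proof (intro conjI ballI)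
  fix n assume n: "n \<in> carrier C0"
  show "actL n \<in> hom L L"
  proof (rule homI)
    fix X assume "X \<in> carrier L"
    then obtain x where x: "x \<in> carrier C2" "X = q2 x" by (rule L_cases)
    then show "actL n X \<in> carrier L" using n by (simp add: actL_q2)
  next
    fix X Y assume "X \<in> carrier L" "Y \<in> carrier L"
    then obtain x y where x: "x \<in> carrier C2" "X = q2 x" and y: "y \<in> carrier C2" "Y = q2 y" by (metis L_cases)
    have "X \<otimes>\<^bsub>L\<^esub> Y = q2 (x \<otimes>\<^bsub>C2\<^esub> y)" using x y by simp
    then show "actL n (X \<otimes>\<^bsub>L\<^esub> Y) = actL n X \<otimes>\<^bsub>L\<^esub> actL n Y"
      using x y n by (simp add: actL_q2)
  qed
next
  fix X assume "X \<in> carrier L"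
  then obtain x where x: "x \<in> carrier C2" "X = q2 x" by (rule L_cases)
  then show "actL \<one>\<^bsub>C0\<^esub> X = X" by (simp add: actL_q2 a2_one)
next
  fix n n' X assume n: "n \<in> carrier C0" "n' \<in> carrier C0" and "X \<in> carrier L"
  then obtain x where x: "x \<in> carrier C2" "X = q2 x" by (metis L_cases)
  then show "actL (n \<otimes>\<^bsub>C0\<^esub> n') X = actL n (actL n' X)" using n by (simp add: actL_q2 a2_mult)
qed

lemma pcm_M: "pre_crossed_module M C0 dM actM"
  unfolding pre_crossed_module_def
proof (intro conjI ballI)
  show "group M" by (rule M_group)
  show "group C0" by (rule grp0)
  show "dM \<in> hom M C0" by (rule dM(1))
  show "aut_action C0 M actM" by (rule aut_M)
  fix n X assume n: "n \<in> carrier C0" and "X \<in> carrier M"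
  then obtain x where x: "x \<in> carrier C1" "X = q1 x" by (metis M_cases)
  then show "dM (actM n X) = n \<otimes>\<^bsub>C0\<^esub> dM X \<otimes>\<^bsub>C0\<^esub> inv\<^bsub>C0\<^esub> n"
    using n by (simp add: actM_q1 dM(2) d1_a1)
qed

sublocale PM: pcm M C0 dM actM unfolding pcm_def by (rule pcm_M)

lemma peiffer_M: "x \<in> carrier C1 \<Longrightarrow> y \<in> carrier C1 \<Longrightarrow> peiffer M dM actM (q1 x) (q1 y) = q1 (w x y)"
  unfolding peiffer_def by (simp add: dM(2) actM_q1)

lemma nil2_M: "nil2_module M C0 dM actM"
  unfolding nil2_module_def
proof (intro conjI)
  show "pre_crossed_module M C0 dM actM" by (rule pcm_M)
  have "PM.S3 \<subseteq> {\<one>\<^bsub>M\<^esub>}"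
  proof
    fix u assume "u \<in> PM.S3"
    then show "u \<in> {\<one>\<^bsub>M\<^esub>}"
    proof (rule PM.S3E)
      fix X Y Z assume "X \<in> carrier M" "Y \<in> carrier M" "Z \<in> carrier M" and u: "u = PM.pw (PM.pw X Y) Z"
      then obtain x y z where "x \<in> carrier C1" "X = q1 x" "y \<in> carrier C1" "Y = q1 y" "z \<in> carrier C1" "Z = q1 z"
        by (metis M_cases)
      then have "u = q1 (w (w x y) z)" using u by (simp add: peiffer_M)
      moreover have "w (w x y) z \<in> P" unfolding P1.P3_eq
        by (rule generate.incl, rule P1.S3I1) (simp_all add: \<open>x \<in> carrier C1\<close> \<open>y \<in> carrier C1\<close> \<open>z \<in> carrier C1\<close>)
      ultimately show ?thesis by (simp add: q1_P)
    next
      fix X Y Z assume "X \<in> carrier M" "Y \<in> carrier M" "Z \<in> carrier M" and u: "u = PM.pw X (PM.pw Y Z)"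
      then obtain x y z where "x \<in> carrier C1" "X = q1 x" "y \<in> carrier C1" "Y = q1 y" "z \<in> carrier C1" "Z = q1 z"
        by (metis M_cases)
      then have "u = q1 (w x (w y z))" using u by (simp add: peiffer_M)
      moreover have "w x (w y z) \<in> P" unfolding P1.P3_eq
        by (rule generate.incl, rule P1.S3I2) (simp_all add: \<open>x \<in> carrier C1\<close> \<open>y \<in> carrier C1\<close> \<open>z \<in> carrier C1\<close>)
      ultimately show ?thesis by (simp add: q1_P)
    qed
  qed
  then have "generate M PM.S3 \<subseteq> {\<one>\<^bsub>M\<^esub>}" by (rule Mg.generate_subgroup_incl[OF _ Mg.triv_subgroup])
  moreover have "\<one>\<^bsub>M\<^esub> \<in> generate M PM.S3" by (rule generate.one)
  ultimately show "P3 M dM actM = {\<one>\<^bsub>M\<^esub>}" unfolding PM.P3_eq by blast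
qed

definition delta where "delta X = the_elem ((q1 \<circ> d2) ` X)"

lemma delta: "delta \<in> hom L M" "l \<in> carrier C2 \<Longrightarrow> delta (q2 l) = q1 (d2 l)"
proof -
  have h: "q1 \<circ> d2 \<in> hom C2 M" by (rule hom_compose[OF d2_hom q1_hom])
  have triv: "(q1 \<circ> d2) n = \<one>\<^bsub>M\<^esub>" if "n \<in> P'" for n
  proof -
    have "d2 n \<in> P" using d2_P' that by blast
    then show ?thesis unfolding comp_def by (rule q1_P)
  qed
  show "delta \<in> hom L M" unfolding delta_def by (rule factor_hom(1)[OF P'_normal M_group h triv])
  show "l \<in> carrier C2 \<Longrightarrow> delta (q2 l) = q1 (d2 l)" unfolding delta_def
    using factor_hom(2)[OF P'_normal M_group h triv] by simp
qed

end


lemma (in group) cancel_l1[simp]: "a \<in> carrier G \<Longrightarrow> z \<in> carrier G \<Longrightarrow> inv a \<otimes> (a \<otimes> z) = z"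
  by (simp add: m_assoc[symmetric])
lemma (in group) cancel_l2[simp]: "a \<in> carrier G \<Longrightarrow> z \<in> carrier G \<Longrightarrow> a \<otimes> (inv a \<otimes> z) = z"
  by (simp add: m_assoc[symmetric])

lemma comm_of_commutator:
  fixes G (structure)
  assumes "group G" "x \<in> carrier G" "y \<in> carrier G" "x \<otimes> y \<otimes> inv x \<otimes> inv y = \<one>"
  shows "x \<otimes> y = y \<otimes> x"
proof -
  interpret group G by fact
  have "x \<otimes> y = (x \<otimes> y \<otimes> inv x \<otimes> inv y) \<otimes> (y \<otimes> x)" using assms(2,3) by (simp add: m_assoc)
  also have "\<dots> = y \<otimes> x" using assms(2-4) by simp
  finally show ?thesis .
qed

context tcm begin

declare mult_FactGroup[simp del] one_FactGroup[simp del] q2_inv[simp del] q1_inv[simp del]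

abbreviation "F x y \<equiv> q2 (pf x y)"

lemma Fc[simp]: "x \<in> carrier C1 \<Longrightarrow> y \<in> carrier C1 \<Longrightarrow> F x y \<in> carrier L"
  by (simp add: pf_closed)

lemma q2_comm: "x \<in> carrier C2 \<Longrightarrow> y \<in> carrier C2 \<Longrightarrow>
   q2 (commutator C2 x y) = q2 x \<otimes>\<^bsub>L\<^esub> q2 y \<otimes>\<^bsub>L\<^esub> inv\<^bsub>L\<^esub> (q2 x) \<otimes>\<^bsub>L\<^esub> inv\<^bsub>L\<^esub> (q2 y)"
  unfolding commutator_def
  by (simp only: hq2.hom_mult hq2.hom_inv G2.m_closed G2.inv_closed)

lemma q2_div: "x \<in> carrier C2 \<Longrightarrow> y \<in> carrier C2 \<Longrightarrow>
   q2 (x \<otimes>\<^bsub>C2\<^esub> inv\<^bsub>C2\<^esub> y) = q2 x \<otimes>\<^bsub>L\<^esub> inv\<^bsub>L\<^esub> (q2 y)"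
  by (simp only: hq2.hom_mult hq2.hom_inv G2.m_closed G2.inv_closed)

lemma R0a: "x \<in> carrier C1 \<Longrightarrow> y \<in> carrier C1 \<Longrightarrow> z \<in> carrier C1 \<Longrightarrow> F (w x y) z = \<one>\<^bsub>L\<^esub>"
  by (rule q2_P') (unfold P'_eq, rule generate.incl, rule T3I1)
lemma R0b: "x \<in> carrier C1 \<Longrightarrow> y \<in> carrier C1 \<Longrightarrow> z \<in> carrier C1 \<Longrightarrow> F x (w y z) = \<one>\<^bsub>L\<^esub>"
  by (rule q2_P') (unfold P'_eq, rule generate.incl, rule T3I2)

lemma R_right: assumes m: "m \<in> carrier C1" "m' \<in> carrier C1" "m'' \<in> carrier C1"
  shows "F m (m' \<otimes>\<^bsub>C1\<^esub> m'') = F m m' \<otimes>\<^bsub>L\<^esub> F m m''"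
proof -
  have k: "m \<otimes>\<^bsub>C1\<^esub> m' \<otimes>\<^bsub>C1\<^esub> inv\<^bsub>C1\<^esub> m \<in> carrier C1" using m by simp
  have "F m (m' \<otimes>\<^bsub>C1\<^esub> m'') = F m m' \<otimes>\<^bsub>L\<^esub> (q2 (pf (d2 (pf m m'')) (m \<otimes>\<^bsub>C1\<^esub> m' \<otimes>\<^bsub>C1\<^esub> inv\<^bsub>C1\<^esub> m)) \<otimes>\<^bsub>L\<^esub> F m m'')"
    unfolding CM3ii[OF m] using m k by (simp add: hq2.hom_mult pf_closed h2.hom_closed)
  also have "q2 (pf (d2 (pf m m'')) (m \<otimes>\<^bsub>C1\<^esub> m' \<otimes>\<^bsub>C1\<^esub> inv\<^bsub>C1\<^esub> m)) = \<one>\<^bsub>L\<^esub>"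
    using m k by (simp add: CM1 R0a)
  finally show ?thesis using m by simp
qed

lemma R_one: assumes m: "m \<in> carrier C1" shows "F m \<one>\<^bsub>C1\<^esub> = \<one>\<^bsub>L\<^esub>"
proof -
  have "F m \<one>\<^bsub>C1\<^esub> = F m \<one>\<^bsub>C1\<^esub> \<otimes>\<^bsub>L\<^esub> F m \<one>\<^bsub>C1\<^esub>"
    using R_right[OF m G1.one_closed G1.one_closed] by simp
  then show ?thesis using m Lg.l_cancel_one'[of "F m \<one>\<^bsub>C1\<^esub>" "F m \<one>\<^bsub>C1\<^esub>"] by simp
qed

lemma R_inv: assumes m: "m \<in> carrier C1" "m' \<in> carrier C1"
  shows "F m (inv\<^bsub>C1\<^esub> m') = inv\<^bsub>L\<^esub> (F m m')"
proof -
  have "F m m' \<otimes>\<^bsub>L\<^esub> F m (inv\<^bsub>C1\<^esub> m') = F m (m' \<otimes>\<^bsub>C1\<^esub> inv\<^bsub>C1\<^esub> m')"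
    by (rule R_right[symmetric]) (simp_all add: m)
  also have "\<dots> = F m \<one>\<^bsub>C1\<^esub>" using m by simp
  also have "\<dots> = \<one>\<^bsub>L\<^esub>" by (rule R_one[OF m(1)])
  finally have "F m m' \<otimes>\<^bsub>L\<^esub> F m (inv\<^bsub>C1\<^esub> m') = \<one>\<^bsub>L\<^esub>" .
  then have "F m (inv\<^bsub>C1\<^esub> m') \<otimes>\<^bsub>L\<^esub> F m m' = \<one>\<^bsub>L\<^esub>"
    by (rule Lg.inv_comm[OF _ Fc[OF m] Fc[OF m(1) G1.inv_closed[OF m(2)]]])
  then have "inv\<^bsub>L\<^esub> (F m m') = F m (inv\<^bsub>C1\<^esub> m')"
    by (rule Lg.inv_equality[OF _ Fc[OF m] Fc[OF m(1) G1.inv_closed[OF m(2)]]])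
  then show ?thesis by (rule sym)
qed

lemma R_comm: assumes "a \<in> carrier C1" "b \<in> carrier C1" "c \<in> carrier C1" "e \<in> carrier C1"
  shows "F a b \<otimes>\<^bsub>L\<^esub> F c e = F c e \<otimes>\<^bsub>L\<^esub> F a b"
proof (rule comm_of_commutator[OF L_group])
  show "F a b \<in> carrier L" "F c e \<in> carrier L" using assms by simp_all
  have "commutator C2 (pf a b) (pf c e) = pf (w c e) (w a b)"
    using assms CM2[of "pf c e" "pf a b"] by (simp add: CM1 pf_closed)
  then have "q2 (commutator C2 (pf a b) (pf c e)) = \<one>\<^bsub>L\<^esub>"
    using assms by (simp add: R0a)
  then show "F a b \<otimes>\<^bsub>L\<^esub> F c e \<otimes>\<^bsub>L\<^esub> inv\<^bsub>L\<^esub> F a b \<otimes>\<^bsub>L\<^esub> inv\<^bsub>L\<^esub> F c e = \<one>\<^bsub>L\<^esub>"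
    using q2_comm[of "pf a b" "pf c e"] assms by (simp only: pf_closed)
qed

lemma R_conj: assumes m: "m \<in> carrier C1" "k \<in> carrier C1" "m'' \<in> carrier C1"
  shows "F m (k \<otimes>\<^bsub>C1\<^esub> m'' \<otimes>\<^bsub>C1\<^esub> inv\<^bsub>C1\<^esub> k) = F m m''"
proof -
  have "F m (k \<otimes>\<^bsub>C1\<^esub> m'' \<otimes>\<^bsub>C1\<^esub> inv\<^bsub>C1\<^esub> k) = F m k \<otimes>\<^bsub>L\<^esub> F m m'' \<otimes>\<^bsub>L\<^esub> inv\<^bsub>L\<^esub> F m k"
    using m by (simp only: R_right R_inv G1.m_closed G1.inv_closed)
  also have "\<dots> = F m m'' \<otimes>\<^bsub>L\<^esub> F m k \<otimes>\<^bsub>L\<^esub> inv\<^bsub>L\<^esub> F m k"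
    using m R_comm[of m k m m''] by simp
  also have "\<dots> = F m m''" using m by (simp add: Lg.m_assoc)
  finally show ?thesis .
qed

lemma R_a2: assumes m: "m \<in> carrier C1" "m' \<in> carrier C1" "m'' \<in> carrier C1"
  shows "q2 (a2 (d1 m) (pf m' m'')) = F m' m''"
proof -
  have l: "pf m' m'' \<in> carrier C2" using m by (simp add: pf_closed)
  have dm: "d1 m \<in> carrier C0" by (rule hom_in_carrier[OF d1_hom m(1)])
  have e1: "d2 (pf m' m'') = w m' m''" by (rule CM1[OF m(2,3)])
  have wc: "w m' m'' \<in> carrier C1" using m by simp
  have "q2 (a2 (d1 m) (pf m' m'') \<otimes>\<^bsub>C2\<^esub> inv\<^bsub>C2\<^esub> (pf m' m'')) = q2 (pf m (w m' m'') \<otimes>\<^bsub>C2\<^esub> pf (w m' m'') m)"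
    unfolding CM4[OF m(1) l, symmetric] e1 ..
  also have "\<dots> = F m (w m' m'') \<otimes>\<^bsub>L\<^esub> F (w m' m'') m"
    by (rule hq2.hom_mult) (rule pf_closed; (rule m wc)+)+
  also have "\<dots> = \<one>\<^bsub>L\<^esub> \<otimes>\<^bsub>L\<^esub> \<one>\<^bsub>L\<^esub>" by (simp only: R0a[OF m(2,3,1)] R0b[OF m])
  also have "\<dots> = \<one>\<^bsub>L\<^esub>" by (rule Lg.l_one[OF Lg.one_closed])
  finally have eq0: "q2 (a2 (d1 m) (pf m' m'') \<otimes>\<^bsub>C2\<^esub> inv\<^bsub>C2\<^esub> (pf m' m'')) = \<one>\<^bsub>L\<^esub>" .
  have eq: "q2 (a2 (d1 m) (pf m' m'')) \<otimes>\<^bsub>L\<^esub> inv\<^bsub>L\<^esub> F m' m'' = \<one>\<^bsub>L\<^esub>"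
    using q2_div[of "a2 (d1 m) (pf m' m'')" "pf m' m''"] eq0 l dm by (simp only: a2_closed)
  have c1: "q2 (a2 (d1 m) (pf m' m'')) \<in> carrier L" using l dm by (simp only: a2_closed hq2.hom_closed)
  have c2: "F m' m'' \<in> carrier L" using l by (rule hq2.hom_closed)
  have "q2 (a2 (d1 m) (pf m' m'')) = (q2 (a2 (d1 m) (pf m' m'')) \<otimes>\<^bsub>L\<^esub> inv\<^bsub>L\<^esub> F m' m'') \<otimes>\<^bsub>L\<^esub> F m' m''"
    using c1 c2 by (simp only: Lg.m_assoc Lg.l_inv Lg.r_one Lg.inv_closed)
  also have "\<dots> = \<one>\<^bsub>L\<^esub> \<otimes>\<^bsub>L\<^esub> F m' m''" by (simp only: eq)
  also have "\<dots> = F m' m''" using c2 by (rule Lg.l_one)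
  finally show ?thesis .
qed

lemma R_left: assumes m: "m \<in> carrier C1" "m' \<in> carrier C1" "m'' \<in> carrier C1"
  shows "F (m \<otimes>\<^bsub>C1\<^esub> m') m'' = F m m'' \<otimes>\<^bsub>L\<^esub> F m' m''"
proof -
  have dm: "d1 m \<in> carrier C0" by (rule hom_in_carrier[OF d1_hom m(1)])
  have "F (m \<otimes>\<^bsub>C1\<^esub> m') m'' = q2 (a2 (d1 m) (pf m' m'')) \<otimes>\<^bsub>L\<^esub> F m (m' \<otimes>\<^bsub>C1\<^esub> m'' \<otimes>\<^bsub>C1\<^esub> inv\<^bsub>C1\<^esub> m')"
    unfolding CM3i[OF m] using m dm by (simp add: hq2.hom_mult pf_closed)
  also have "\<dots> = F m' m'' \<otimes>\<^bsub>L\<^esub> F m m''" using m by (simp add: R_a2 R_conj)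
  also have "\<dots> = F m m'' \<otimes>\<^bsub>L\<^esub> F m' m''" using m R_comm by blast
  finally show ?thesis .
qed

definition Fimg where "Fimg = {F x y | x y. x \<in> carrier C1 \<and> y \<in> carrier C1}"
abbreviation "A \<equiv> subgroup_generated L Fimg"

lemma Fimg_sub: "Fimg \<subseteq> carrier L" unfolding Fimg_def by auto

lemma A_comm: "comm_group A"
  by (rule comm_group_generated[OF L_group Fimg_sub]) (auto simp: Fimg_def R_comm)

lemma F_A: "x \<in> carrier C1 \<Longrightarrow> y \<in> carrier C1 \<Longrightarrow> F x y \<in> carrier A"
  unfolding carrier_subgroup_generated Fimg_def by (rule generate.incl) auto

lemma F_hom_left: "y \<in> carrier C1 \<Longrightarrow> (\<lambda>x. F x y) \<in> hom C1 A"
  by (rule homI) (simp_all add: F_A R_left)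

lemma F_hom_right: "x \<in> carrier C1 \<Longrightarrow> (\<lambda>y. F x y) \<in> hom C1 A"
  by (rule homI) (simp_all add: F_A R_right)

end


lemma comm_group_comm_one:
  fixes G (structure)
  assumes "comm_group G" "p \<in> carrier G" "q \<in> carrier G"
  shows "p \<otimes> q \<otimes> inv p \<otimes> inv q = \<one>"
proof -
  interpret comm_group G by fact
  have "p \<otimes> q \<otimes> inv p \<otimes> inv q = (p \<otimes> q) \<otimes> (inv p \<otimes> inv q)" using assms by (simp add: m_assoc)
  also have "inv p \<otimes> inv q = inv (p \<otimes> q)" using assms by (simp add: inv_mult)
  also have "(p \<otimes> q) \<otimes> inv (p \<otimes> q) = \<one>" using assms by simp
  finally show ?thesis .
qed

context tcm begin

abbreviation "P2M \<equiv> P2 M dM actM"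
abbreviation "MC \<equiv> Mcr M dM actM"
abbreviation "Dr \<equiv> derived MC (carrier MC)"
abbreviation "CC \<equiv> Cgrp M dM actM"
abbreviation "bq x \<equiv> bar M dM actM (q1 x)"

lemma MC_eq: "MC = M Mod P2M" unfolding Mcr_def ..
lemma CC_eq: "CC = MC Mod Dr" unfolding Cgrp_def abelianization_def ..
lemma bar_eq: "bar M dM actM X = Dr #>\<^bsub>MC\<^esub> (P2M #>\<^bsub>M\<^esub> X)" unfolding bar_def ab_class_def ..

lemma P2M_normal: "P2M \<lhd> M" by (rule PM.P2_normal)
lemma MC_group: "group MC" unfolding MC_eq by (rule normal.factorgroup_is_group[OF P2M_normal])
lemma Dr_normal: "Dr \<lhd> MC" by (rule group.derived_is_normal[OF MC_group group.normal_self[OF MC_group]])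
lemma CC_comm: "comm_group CC" unfolding CC_eq by (rule group.derived_quot_is_comm_group[OF MC_group])
lemma CC_group: "group CC" using CC_comm comm_group.axioms(2) by blast

lemma bq_hom: "(\<lambda>x. bq x) \<in> hom C1 CC"
proof -
  have r2: "(\<lambda>X. P2M #>\<^bsub>M\<^esub> X) \<in> hom M MC" unfolding MC_eq by (rule normal.r_coset_hom_Mod[OF P2M_normal])
  have r3: "(\<lambda>Y. Dr #>\<^bsub>MC\<^esub> Y) \<in> hom MC CC" unfolding CC_eq by (rule normal.r_coset_hom_Mod[OF Dr_normal])
  have "(\<lambda>Y. Dr #>\<^bsub>MC\<^esub> Y) \<circ> ((\<lambda>X. P2M #>\<^bsub>M\<^esub> X) \<circ> q1) \<in> hom C1 CC"
    by (rule hom_compose[OF hom_compose[OF q1_hom r2] r3])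
  moreover have "(\<lambda>Y. Dr #>\<^bsub>MC\<^esub> Y) \<circ> ((\<lambda>X. P2M #>\<^bsub>M\<^esub> X) \<circ> q1) = (\<lambda>x. bq x)"
    by (simp add: fun_eq_iff bar_eq)
  ultimately show ?thesis by simp
qed

lemma carrier_CC: "carrier CC = (\<lambda>x. bq x) ` carrier C1"
proof -
  have e1: "carrier CC = (\<lambda>Y. Dr #>\<^bsub>MC\<^esub> Y) ` carrier MC" unfolding CC_eq by (rule carrier_FactGroup)
  have e2: "carrier MC = (\<lambda>X. P2M #>\<^bsub>M\<^esub> X) ` carrier M" unfolding MC_eq by (rule carrier_FactGroup)
  show ?thesis by (simp only: e1 e2 carrier_M image_image bar_eq)
qed

lemma key:
  fixes H (structure)
  assumes H: "comm_group H" and h: "h \<in> hom C1 H"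
    and kill: "\<And>x y. x \<in> carrier C1 \<Longrightarrow> y \<in> carrier C1 \<Longrightarrow> h (w x y) = \<one>\<^bsub>H\<^esub>"
    and x: "x \<in> carrier C1" "x' \<in> carrier C1" and eq: "bq x = bq x'"
  shows "h x = h x'"
proof -
  interpret H: comm_group H by fact
  have Hg: "group H" by (rule H.is_group)
  have gh: "group_hom C1 H h" by (simp add: group_hom_def group_hom_axioms_def grp1 Hg h)
  have "P1.S2 \<subseteq> kernel C1 H h"
  proof
    fix s assume "s \<in> P1.S2"
    then show "s \<in> kernel C1 H h"
      by (rule P1.S2E) (simp add: kernel_def kill)
  qed
  then have "P2 C1 d1 a1 \<subseteq> kernel C1 H h"
    unfolding P1.P2_eq by (rule G1.generate_subgroup_incl[OF _ group_hom.subgroup_kernel[OF gh]])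
  then have triv1: "h n = \<one>" if "n \<in> P" for n using that P1.P3_sub_P2 by (auto simp: kernel_def)
  define h1 where "h1 = (\<lambda>X. the_elem (h ` X))"
  have h1: "h1 \<in> hom M H" unfolding h1_def by (rule factor_hom(1)[OF P_normal Hg h triv1])
  have h1q: "h1 (q1 u) = h u" if "u \<in> carrier C1" for u
    unfolding h1_def by (rule factor_hom(2)[OF P_normal Hg h triv1 that])
  have gh1: "group_hom M H h1" by (simp add: group_hom_def group_hom_axioms_def M_group Hg h1)
  have "PM.S2 \<subseteq> kernel M H h1"
  proof
    fix s assume "s \<in> PM.S2"
    then show "s \<in> kernel M H h1"
    proof (rule PM.S2E)
      fix X Y assume "X \<in> carrier M" "Y \<in> carrier M" and s: "s = PM.pw X Y"
      then obtain u v where uv: "u \<in> carrier C1" "X = q1 u" "v \<in> carrier C1" "Y = q1 v" by (metis M_cases)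
      then have "s = q1 (w u v)" using s by (simp add: peiffer_M)
      moreover have "w u v \<in> carrier C1" using uv by simp
      ultimately show ?thesis using uv by (simp add: kernel_def h1q kill)
    qed
  qed
  then have "P2M \<subseteq> kernel M H h1"
    unfolding PM.P2_eq by (rule Mg.generate_subgroup_incl[OF _ group_hom.subgroup_kernel[OF gh1]])
  then have triv2: "h1 n = \<one>" if "n \<in> P2M" for n using that by (auto simp: kernel_def)
  define h2 where "h2 = (\<lambda>X. the_elem (h1 ` X))"
  have h2: "h2 \<in> hom MC H" unfolding h2_def MC_eq by (rule factor_hom(1)[OF P2M_normal Hg h1 triv2])
  have h2q: "h2 (P2M #>\<^bsub>M\<^esub> X) = h1 X" if "X \<in> carrier M" for X
    unfolding h2_def by (rule factor_hom(2)[OF P2M_normal Hg h1 triv2 that])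
  have gh2: "group_hom MC H h2" by (simp add: group_hom_def group_hom_axioms_def MC_group Hg h2)
  interpret MCg: group MC by (rule MC_group)
  have "derived_set MC (carrier MC) \<subseteq> kernel MC H h2"
  proof
    fix s assume "s \<in> derived_set MC (carrier MC)"
    then obtain a b where ab: "a \<in> carrier MC" "b \<in> carrier MC"
      and s: "s = a \<otimes>\<^bsub>MC\<^esub> b \<otimes>\<^bsub>MC\<^esub> inv\<^bsub>MC\<^esub> a \<otimes>\<^bsub>MC\<^esub> inv\<^bsub>MC\<^esub> b" by blast
    have c: "h2 a \<in> carrier H" "h2 b \<in> carrier H" using ab group_hom.hom_closed[OF gh2] by auto
    have "h2 s = h2 a \<otimes> h2 b \<otimes> inv (h2 a) \<otimes> inv (h2 b)"
      unfolding s using ab MC_group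
      by (simp add: group_hom.hom_mult[OF gh2] group_hom.hom_inv[OF gh2] MCg.m_closed MCg.inv_closed)
    also have "\<dots> = \<one>" by (rule comm_group_comm_one[OF H c])
    finally show "s \<in> kernel MC H h2" unfolding kernel_def using s ab MC_group
      by (simp add: MCg.m_closed MCg.inv_closed)
  qed
  then have "Dr \<subseteq> kernel MC H h2"
    unfolding derived_def by (rule group.generate_subgroup_incl[OF MC_group _ group_hom.subgroup_kernel[OF gh2]])
  then have triv3: "h2 n = \<one>" if "n \<in> Dr" for n using that by (auto simp: kernel_def)
  define h3 where "h3 = (\<lambda>X. the_elem (h2 ` X))"
  have h3q: "h3 (Dr #>\<^bsub>MC\<^esub> Y) = h2 Y" if "Y \<in> carrier MC" for Y
    unfolding h3_def by (rule factor_hom(2)[OF Dr_normal Hg h2 triv3 that])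
  have main: "h u = h3 (bq u)" if u: "u \<in> carrier C1" for u
  proof -
    have qu: "q1 u \<in> carrier M" using u by simp
    have pu: "P2M #>\<^bsub>M\<^esub> q1 u \<in> carrier MC"
      unfolding MC_eq carrier_FactGroup by (rule imageI, rule imageI, rule u)
    show ?thesis unfolding bar_eq h3q[OF pu] h2q[OF qu] h1q[OF u] ..
  qed
  have "h x = h3 (bq x)" by (rule main[OF x(1)])
  also have "\<dots> = h3 (bq x')" by (simp only: eq)
  also have "\<dots> = h x'" by (rule main[OF x(2), symmetric])
  finally show ?thesis .
qed

definition rep where "rep c = (SOME x. x \<in> carrier C1 \<and> bq x = c)"

lemma bq_closed: "x \<in> carrier C1 \<Longrightarrow> bq x \<in> carrier CC"
  using hom_in_carrier[OF bq_hom] by simp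

lemma rep: assumes c: "c \<in> carrier CC" shows "rep c \<in> carrier C1 \<and> bq (rep c) = c"
proof -
  from c have "c \<in> (\<lambda>x. bq x) ` carrier C1" by (simp only: carrier_CC)
  then obtain x where "x \<in> carrier C1" "c = bq x" by (rule imageE)
  then have "\<exists>x. x \<in> carrier C1 \<and> bq x = c" by blast
  then show ?thesis unfolding rep_def by (rule someI_ex)
qed

definition Fd where "Fd c c' = F (rep c) (rep c')"

lemma A_group: "group A" using A_comm comm_group.axioms(2) by blast

lemma Fd_bq: assumes x: "x \<in> carrier C1" and y: "y \<in> carrier C1"
  shows "Fd (bq x) (bq y) = F x y"
proof -
  have bx: "bq x \<in> carrier CC" using x by (rule bq_closed)
  have by': "bq y \<in> carrier CC" using y by (rule bq_closed)
  note rx = rep[OF bx] and ry = rep[OF by']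
  have "F (rep (bq x)) (rep (bq y)) = F x (rep (bq y))"
  proof (rule key[OF A_comm F_hom_left[OF ry[THEN conjunct1]]])
    show "F (w a b) (rep (bq y)) = \<one>\<^bsub>A\<^esub>" if "a \<in> carrier C1" "b \<in> carrier C1" for a b
      using R0a[OF that ry[THEN conjunct1]] by simp
  qed (rule conjunct1[OF rx], rule x, rule conjunct2[OF rx])
  also have "\<dots> = F x y"
  proof (rule key[OF A_comm F_hom_right[OF x]])
    show "F x (w a b) = \<one>\<^bsub>A\<^esub>" if "a \<in> carrier C1" "b \<in> carrier C1" for a b
      using R0b[OF x that] by simp
  qed (rule conjunct1[OF ry], rule y, rule conjunct2[OF ry])
  finally show ?thesis unfolding Fd_def .
qed

end


context tcm begin

abbreviation "SS \<equiv> carrier CC \<times> carrier CC"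
abbreviation "TF \<equiv> tensor_free CC"
abbreviation "TS \<equiv> tensor_sub CC"
abbreviation "TT \<equiv> tensor CC"

lemma TF_eq: "TF = free_Abelian_group SS" unfolding tensor_free_def ..
lemma TF_group: "group TF" unfolding TF_eq by (rule group_free_Abelian_group)
lemma TF_comm: "comm_group TF" unfolding TF_eq by (rule abelian_free_Abelian_group)

lemma frag_TF: "p \<in> SS \<Longrightarrow> frag_of p \<in> carrier TF"
  unfolding TF_eq by (simp add: keys_frag_of)

lemma rel_eq: assumes "p \<in> SS" "q \<in> SS" "r \<in> SS"
  shows "frag_of p - frag_of q - frag_of r = frag_of p \<otimes>\<^bsub>TF\<^esub> inv\<^bsub>TF\<^esub> (frag_of q) \<otimes>\<^bsub>TF\<^esub> inv\<^bsub>TF\<^esub> (frag_of r)"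
proof -
  have "inv\<^bsub>TF\<^esub> (frag_of q) = - frag_of q" unfolding TF_eq using assms by (simp add: keys_frag_of)
  moreover have "inv\<^bsub>TF\<^esub> (frag_of r) = - frag_of r" unfolding TF_eq using assms by (simp add: keys_frag_of)
  ultimately show ?thesis unfolding TF_eq by simp
qed

lemma rels_cases:
  assumes "u \<in> tensor_rels CC"
  obtains a a' b where "a \<in> carrier CC" "a' \<in> carrier CC" "b \<in> carrier CC"
      "u = frag_of (a \<otimes>\<^bsub>CC\<^esub> a', b) - frag_of (a, b) - frag_of (a', b)"
    | a b b' where "a \<in> carrier CC" "b \<in> carrier CC" "b' \<in> carrier CC"
      "u = frag_of (a, b \<otimes>\<^bsub>CC\<^esub> b') - frag_of (a, b) - frag_of (a, b')"
  using assms unfolding tensor_rels_def by blast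

lemma rels_sub: "tensor_rels CC \<subseteq> carrier TF"
proof
  interpret TFg: group TF by (rule TF_group)
  interpret CCg: group CC by (rule CC_group)
  fix u assume "u \<in> tensor_rels CC"
  then show "u \<in> carrier TF"
  proof (rule rels_cases)
    fix a a' b assume ab: "a \<in> carrier CC" "a' \<in> carrier CC" "b \<in> carrier CC"
      and u: "u = frag_of (a \<otimes>\<^bsub>CC\<^esub> a', b) - frag_of (a, b) - frag_of (a', b)"
    show ?thesis unfolding u using ab
      by (subst rel_eq) (auto intro!: TFg.m_closed TFg.inv_closed frag_TF)
  next
    fix a b b' assume ab: "a \<in> carrier CC" "b \<in> carrier CC" "b' \<in> carrier CC"
      and u: "u = frag_of (a, b \<otimes>\<^bsub>CC\<^esub> b') - frag_of (a, b) - frag_of (a, b')"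
    show ?thesis unfolding u using ab
      by (subst rel_eq) (auto intro!: TFg.m_closed TFg.inv_closed frag_TF)
  qed
qed

lemma TS_normal: "TS \<lhd> TF"
  unfolding tensor_sub_def
  by (rule comm_group.subgroup_imp_normal[OF TF_comm group.generate_is_subgroup[OF TF_group rels_sub]])

lemma Fd_A: "u \<in> carrier CC \<Longrightarrow> v \<in> carrier CC \<Longrightarrow> Fd u v \<in> carrier A"
  unfolding Fd_def using rep by (simp add: F_A)

definition hF where "hF = (SOME h. h \<in> hom (free_Abelian_group SS) A \<and> (\<forall>p\<in>SS. h (frag_of p) = (\<lambda>(u,v). Fd u v) p))"

lemma hF: "hF \<in> hom TF A" "p \<in> SS \<Longrightarrow> hF (frag_of p) = Fd (fst p) (snd p)"
proof -
  have img: "(\<lambda>(u,v). Fd u v) ` SS \<subseteq> carrier A" using Fd_A by auto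
  obtain h where h: "h \<in> hom (free_Abelian_group SS) A" "\<And>p. p \<in> SS \<Longrightarrow> h (frag_of p) = (\<lambda>(u,v). Fd u v) p"
    by (rule comm_group.free_Abelian_group_universal[OF A_comm img]) blast
  have "\<exists>h. h \<in> hom (free_Abelian_group SS) A \<and> (\<forall>p\<in>SS. h (frag_of p) = (\<lambda>(u,v). Fd u v) p)"
    using h by blast
  then have "hF \<in> hom (free_Abelian_group SS) A \<and> (\<forall>p\<in>SS. hF (frag_of p) = (\<lambda>(u,v). Fd u v) p)"
    unfolding hF_def by (rule someI_ex)
  then show "hF \<in> hom TF A" "p \<in> SS \<Longrightarrow> hF (frag_of p) = Fd (fst p) (snd p)"
    unfolding TF_eq by (auto simp: case_prod_beta)
qed

lemma hF_triv: "n \<in> TS \<Longrightarrow> hF n = \<one>\<^bsub>A\<^esub>"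
proof -
  interpret TFg: group TF by (rule TF_group)
  interpret CCg: group CC by (rule CC_group)
  interpret Ag: comm_group A by (rule A_comm)
  have gh: "group_hom TF A hF" by (simp add: group_hom_def group_hom_axioms_def TF_group Ag.is_group hF(1))
  have val: "hF (frag_of p - frag_of q - frag_of r) = hF (frag_of p) \<otimes>\<^bsub>A\<^esub> inv\<^bsub>A\<^esub> (hF (frag_of q)) \<otimes>\<^bsub>A\<^esub> inv\<^bsub>A\<^esub> (hF (frag_of r))"
    if "p \<in> SS" "q \<in> SS" "r \<in> SS" for p q r
    using that by (simp add: rel_eq group_hom.hom_mult[OF gh] group_hom.hom_inv[OF gh] frag_TF TFg.m_closed TFg.inv_closed)
  have "tensor_rels CC \<subseteq> kernel TF A hF"
  proof
    fix u assume u0: "u \<in> tensor_rels CC"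
    then have uc: "u \<in> carrier TF" using rels_sub by blast
    from u0 have "hF u = \<one>\<^bsub>A\<^esub>"
    proof (rule rels_cases)
      fix a a' b assume ab: "a \<in> carrier CC" "a' \<in> carrier CC" "b \<in> carrier CC"
        and u: "u = frag_of (a \<otimes>\<^bsub>CC\<^esub> a', b) - frag_of (a, b) - frag_of (a', b)"
      obtain xa xa' yb where r: "xa \<in> carrier C1" "a = bq xa" "xa' \<in> carrier C1" "a' = bq xa'" "yb \<in> carrier C1" "b = bq yb"
        using rep ab by metis
      have aa: "a \<otimes>\<^bsub>CC\<^esub> a' = bq (xa \<otimes>\<^bsub>C1\<^esub> xa')"
        using hom_mult[OF bq_hom r(1) r(3)] r by simp
      have "Fd (a \<otimes>\<^bsub>CC\<^esub> a') b = F xa yb \<otimes>\<^bsub>L\<^esub> F xa' yb"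
        unfolding aa r(6) using r by (simp add: Fd_bq R_left)
      moreover have "Fd a b = F xa yb" "Fd a' b = F xa' yb" unfolding r(2) r(4) r(6) using r by (simp_all add: Fd_bq)
      ultimately have "hF u = F xa yb \<otimes>\<^bsub>A\<^esub> F xa' yb \<otimes>\<^bsub>A\<^esub> inv\<^bsub>A\<^esub> (F xa yb) \<otimes>\<^bsub>A\<^esub> inv\<^bsub>A\<^esub> (F xa' yb)"
        unfolding u using ab by (simp add: val hF(2))
      also have "\<dots> = \<one>\<^bsub>A\<^esub>" by (rule comm_group_comm_one[OF A_comm F_A F_A]) (use r in auto)
      finally show ?thesis .
    next
      fix a b b' assume ab: "a \<in> carrier CC" "b \<in> carrier CC" "b' \<in> carrier CC"
        and u: "u = frag_of (a, b \<otimes>\<^bsub>CC\<^esub> b') - frag_of (a, b) - frag_of (a, b')"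
      obtain xa yb yb' where r: "xa \<in> carrier C1" "a = bq xa" "yb \<in> carrier C1" "b = bq yb" "yb' \<in> carrier C1" "b' = bq yb'"
        using rep ab by metis
      have bb: "b \<otimes>\<^bsub>CC\<^esub> b' = bq (yb \<otimes>\<^bsub>C1\<^esub> yb')"
        using hom_mult[OF bq_hom r(3) r(5)] r by simp
      have "Fd a (b \<otimes>\<^bsub>CC\<^esub> b') = F xa yb \<otimes>\<^bsub>L\<^esub> F xa yb'"
        unfolding bb r(2) using r by (simp add: Fd_bq R_right)
      moreover have "Fd a b = F xa yb" "Fd a b' = F xa yb'" unfolding r(2) r(4) r(6) using r by (simp_all add: Fd_bq)
      ultimately have "hF u = F xa yb \<otimes>\<^bsub>A\<^esub> F xa yb' \<otimes>\<^bsub>A\<^esub> inv\<^bsub>A\<^esub> (F xa yb) \<otimes>\<^bsub>A\<^esub> inv\<^bsub>A\<^esub> (F xa yb')"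
        unfolding u using ab by (simp add: val hF(2))
      also have "\<dots> = \<one>\<^bsub>A\<^esub>" by (rule comm_group_comm_one[OF A_comm F_A F_A]) (use r in auto)
      finally show ?thesis .
    qed
    then show "u \<in> kernel TF A hF" using uc by (simp add: kernel_def)
  qed
  then have "TS \<subseteq> kernel TF A hF"
    unfolding tensor_sub_def by (rule TFg.generate_subgroup_incl[OF _ group_hom.subgroup_kernel[OF gh]])
  then show "n \<in> TS \<Longrightarrow> hF n = \<one>\<^bsub>A\<^esub>" by (auto simp: kernel_def)
qed

definition omega where "omega X = the_elem (hF ` X)"

lemma omega_A: "omega \<in> hom TT A"
  unfolding omega_def tensor_def by (rule factor_hom(1)[OF TS_normal A_group hF(1) hF_triv])

lemma omega_hom: "omega \<in> hom TT L"
  by (rule hom_generated_to_G[OF L_group omega_A])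

lemma omega_tens: "u \<in> carrier CC \<Longrightarrow> v \<in> carrier CC \<Longrightarrow> omega (tens CC u v) = Fd u v"
  unfolding omega_def tens_def
  using factor_hom(2)[OF TS_normal A_group hF(1) hF_triv frag_TF[of "(u,v)"]] hF(2)[of "(u,v)"] by simp

lemma omega_bq: "x \<in> carrier C1 \<Longrightarrow> y \<in> carrier C1 \<Longrightarrow> omega (tens CC (bq x) (bq y)) = F x y"
  using omega_tens[OF bq_closed bq_closed] Fd_bq by simp

lemma tens_closed: "u \<in> carrier CC \<Longrightarrow> v \<in> carrier CC \<Longrightarrow> tens CC u v \<in> carrier TT"
  unfolding tens_def tensor_def carrier_FactGroup by (rule imageI, rule frag_TF) simp

end


context tcm begin

lemma d2_closed: "l \<in> carrier C2 \<Longrightarrow> d2 l \<in> carrier C1" by (rule hom_in_carrier[OF d2_hom])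
lemma d1_closed: "x \<in> carrier C1 \<Longrightarrow> d1 x \<in> carrier C0" by (rule hom_in_carrier[OF d1_hom])

lemma bar_delta: "l \<in> carrier C2 \<Longrightarrow> bar M dM actM (delta (q2 l)) = bq (d2 l)"
  by (simp only: delta(2))

lemma QM3: assumes x: "x \<in> carrier C1" and l: "l \<in> carrier C2"
  shows "actL (dM (q1 x)) (q2 l) =
     omega (tens CC (bq x) (bq (d2 l)) \<otimes>\<^bsub>TT\<^esub> tens CC (bq (d2 l)) (bq x)) \<otimes>\<^bsub>L\<^esub> q2 l"
proof -
  have dl: "d2 l \<in> carrier C1" using l by (rule d2_closed)
  have p1: "pf x (d2 l) \<in> carrier C2" using x dl by (rule pf_closed)
  have p2: "pf (d2 l) x \<in> carrier C2" using dl x by (rule pf_closed)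
  have dx: "d1 x \<in> carrier C0" using x by (rule d1_closed)
  have "omega (tens CC (bq x) (bq (d2 l)) \<otimes>\<^bsub>TT\<^esub> tens CC (bq (d2 l)) (bq x)) =
        omega (tens CC (bq x) (bq (d2 l))) \<otimes>\<^bsub>L\<^esub> omega (tens CC (bq (d2 l)) (bq x))"
    by (rule hom_mult[OF omega_hom tens_closed tens_closed]) (simp_all only: bq_closed x dl)
  also have "\<dots> = F x (d2 l) \<otimes>\<^bsub>L\<^esub> F (d2 l) x" by (simp only: omega_bq x dl)
  also have "\<dots> = q2 (pf x (d2 l) \<otimes>\<^bsub>C2\<^esub> pf (d2 l) x)" by (rule hq2.hom_mult[symmetric, OF p1 p2])
  also have "\<dots> = q2 (a2 (d1 x) l \<otimes>\<^bsub>C2\<^esub> inv\<^bsub>C2\<^esub> l)" by (simp only: CM4[OF x l])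
  finally have e: "omega (tens CC (bq x) (bq (d2 l)) \<otimes>\<^bsub>TT\<^esub> tens CC (bq (d2 l)) (bq x)) \<otimes>\<^bsub>L\<^esub> q2 l
     = q2 (a2 (d1 x) l \<otimes>\<^bsub>C2\<^esub> inv\<^bsub>C2\<^esub> l) \<otimes>\<^bsub>L\<^esub> q2 l" by (rule arg_cong[where f="\<lambda>z. z \<otimes>\<^bsub>L\<^esub> q2 l"])
  also have "\<dots> = q2 (a2 (d1 x) l \<otimes>\<^bsub>C2\<^esub> inv\<^bsub>C2\<^esub> l \<otimes>\<^bsub>C2\<^esub> l)"
    by (rule hq2.hom_mult[symmetric]) (simp_all add: dx l)
  also have "a2 (d1 x) l \<otimes>\<^bsub>C2\<^esub> inv\<^bsub>C2\<^esub> l \<otimes>\<^bsub>C2\<^esub> l = a2 (d1 x) l"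
    using dx l by (simp add: G2.m_assoc)
  finally have e2: "omega (tens CC (bq x) (bq (d2 l)) \<otimes>\<^bsub>TT\<^esub> tens CC (bq (d2 l)) (bq x)) \<otimes>\<^bsub>L\<^esub> q2 l = q2 (a2 (d1 x) l)" .
  have "actL (dM (q1 x)) (q2 l) = q2 (a2 (d1 x) l)" using x l dx by (simp only: dM(2) actL_q2)
  then show ?thesis by (rule trans[OF _ e2[symmetric]])
qed

lemma QM4: assumes l: "l \<in> carrier C2" "l' \<in> carrier C2"
  shows "omega (tens CC (bq (d2 l)) (bq (d2 l'))) = commutator L (q2 l') (q2 l)"
proof -
  have "omega (tens CC (bq (d2 l)) (bq (d2 l'))) = F (d2 l) (d2 l')"
    by (rule omega_bq) (simp_all only: d2_closed l)
  also have "\<dots> = q2 (commutator C2 l' l)" by (simp only: CM2 l)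
  also have "\<dots> = commutator L (q2 l') (q2 l)" unfolding commutator_def[of L] by (rule q2_comm[OF l(2) l(1)])
  finally show ?thesis .
qed

lemma qm: "quadratic_module L M C0 omega delta dM actM actL"
  unfolding quadratic_module_def Let_def
proof (intro conjI)
  show "nil2_module M C0 dM actM" by (rule nil2_M)
  show "group L" by (rule L_group)
  show "omega \<in> hom TT L" by (rule omega_hom)
  show "delta \<in> hom L M" by (rule delta(1))
  show "aut_action C0 L actL" by (rule aut_L)
  have dw: "delta (omega (tens CC (bar M dM actM X) (bar M dM actM Y))) = peiffer M dM actM X Y"
    if XY: "X \<in> carrier M" "Y \<in> carrier M" for X Y
  proof -
    obtain x where x: "x \<in> carrier C1" "X = q1 x" using XY(1) by (rule M_cases)
    obtain y where y: "y \<in> carrier C1" "Y = q1 y" using XY(2) by (rule M_cases)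
    note xy = x y
    have "delta (omega (tens CC (bq x) (bq y))) = delta (q2 (pf x y))" by (simp only: omega_bq xy)
    also have "\<dots> = q1 (w x y)" using xy by (simp only: delta(2) pf_closed CM1)
    also have "\<dots> = peiffer M dM actM (q1 x) (q1 y)" by (rule peiffer_M[symmetric]) (simp_all only: xy)
    finally show ?thesis by (simp only: xy)
  qed
  show "\<forall>x\<in>carrier M. \<forall>y\<in>carrier M. delta (omega (tens CC (bar M dM actM x) (bar M dM actM y))) = peiffer M dM actM x y"
    using dw by blast
  show "\<exists>wm. wm \<in> hom TT M \<and> (\<forall>x\<in>carrier M. \<forall>y\<in>carrier M. wm (tens CC (bar M dM actM x) (bar M dM actM y)) = peiffer M dM actM x y)"
  proof (intro exI conjI ballI)
    show "delta \<circ> omega \<in> hom TT M" by (rule hom_compose[OF omega_hom delta(1)])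
    fix X Y assume "X \<in> carrier M" "Y \<in> carrier M"
    then show "(delta \<circ> omega) (tens CC (bar M dM actM X) (bar M dM actM Y)) = peiffer M dM actM X Y"
      using dw by simp
  qed
  show "\<forall>a\<in>carrier L. dM (delta a) = \<one>\<^bsub>C0\<^esub>"
  proof
    fix a assume "a \<in> carrier L"
    then obtain l where l: "l \<in> carrier C2" "a = q2 l" by (rule L_cases)
    then show "dM (delta a) = \<one>\<^bsub>C0\<^esub>" by (simp add: delta(2) dM(2) d2_closed d1d2)
  qed
  show "\<forall>n\<in>carrier C0. \<forall>x\<in>carrier M. \<forall>y\<in>carrier M.
        omega (tens CC (bar M dM actM (actM n x)) (bar M dM actM (actM n y))) = actL n (omega (tens CC (bar M dM actM x) (bar M dM actM y)))"
  proof (intro ballI)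
    fix n X Y assume n: "n \<in> carrier C0" and XY: "X \<in> carrier M" "Y \<in> carrier M"
    obtain x where x: "x \<in> carrier C1" "X = q1 x" using XY(1) by (rule M_cases)
    obtain y where y: "y \<in> carrier C1" "Y = q1 y" using XY(2) by (rule M_cases)
    note xy = x y
    have ax: "a1 n x \<in> carrier C1" "a1 n y \<in> carrier C1" using n xy by simp_all
    have "omega (tens CC (bar M dM actM (actM n X)) (bar M dM actM (actM n Y))) = F (a1 n x) (a1 n y)"
      using n xy ax by (simp only: actM_q1 omega_bq)
    also have "\<dots> = q2 (a2 n (pf x y))" using n xy by (simp only: CM5)
    also have "\<dots> = actL n (q2 (pf x y))" using n xy by (simp only: actL_q2 pf_closed)
    also have "\<dots> = actL n (omega (tens CC (bar M dM actM X) (bar M dM actM Y)))" using xy by (simp only: omega_bq)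
    finally show "omega (tens CC (bar M dM actM (actM n X)) (bar M dM actM (actM n Y))) = actL n (omega (tens CC (bar M dM actM X) (bar M dM actM Y)))" .
  qed
  show "\<forall>n\<in>carrier C0. \<forall>a\<in>carrier L. delta (actL n a) = actM n (delta a)"
  proof (intro ballI)
    fix n a assume n: "n \<in> carrier C0" and a: "a \<in> carrier L"
    obtain l where l: "l \<in> carrier C2" "a = q2 l" using a by (rule L_cases)
    have "delta (actL n a) = q1 (d2 (a2 n l))" using n l by (simp only: actL_q2 delta(2) a2_closed)
    also have "\<dots> = q1 (a1 n (d2 l))" using n l by (simp only: d2_a2)
    also have "\<dots> = actM n (delta a)" using n l by (simp only: actM_q1 delta(2) d2_closed)
    finally show "delta (actL n a) = actM n (delta a)" .
  qed
  show "\<forall>a\<in>carrier L. \<forall>x\<in>carrier M.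
      actL (dM x) a = omega (tens CC (bar M dM actM x) (bar M dM actM (delta a)) \<otimes>\<^bsub>TT\<^esub> tens CC (bar M dM actM (delta a)) (bar M dM actM x)) \<otimes>\<^bsub>L\<^esub> a"
  proof (intro ballI)
    fix a X assume aX: "a \<in> carrier L" "X \<in> carrier M"
    obtain l where l: "l \<in> carrier C2" "a = q2 l" using aX(1) by (rule L_cases)
    obtain x where x: "x \<in> carrier C1" "X = q1 x" using aX(2) by (rule M_cases)
    show "actL (dM X) a = omega (tens CC (bar M dM actM X) (bar M dM actM (delta a)) \<otimes>\<^bsub>TT\<^esub> tens CC (bar M dM actM (delta a)) (bar M dM actM X)) \<otimes>\<^bsub>L\<^esub> a"
      unfolding l(2) x(2) bar_delta[OF l(1)] by (rule QM3[OF x(1) l(1)])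
  qed
  show "\<forall>a\<in>carrier L. \<forall>c\<in>carrier L. omega (tens CC (bar M dM actM (delta a)) (bar M dM actM (delta c))) = commutator L c a"
  proof (intro ballI)
    fix a c assume ac: "a \<in> carrier L" "c \<in> carrier L"
    obtain l where l1: "l \<in> carrier C2" "a = q2 l" using ac(1) by (rule L_cases)
    obtain l' where l2: "l' \<in> carrier C2" "c = q2 l'" using ac(2) by (rule L_cases)
    note l = l1 l2
    show "omega (tens CC (bar M dM actM (delta a)) (bar M dM actM (delta c))) = commutator L c a"
      unfolding l(2) l(4) bar_delta[OF l(1)] bar_delta[OF l(3)] by (rule QM4[OF l(1) l(3)])
  qed
qed

lemma main: "\<exists>d \<delta> \<omega> am al.
       d \<in> hom M C0 \<and> (\<forall>x\<in>carrier C1. d (q1 x) = d1 x) \<and>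
       \<delta> \<in> hom L M \<and> (\<forall>l\<in>carrier C2. \<delta> (q2 l) = q1 (d2 l)) \<and>
       \<omega> \<in> hom (tensor (Cgrp M d am)) L \<and>
       (\<forall>x\<in>carrier C1. \<forall>y\<in>carrier C1.
          \<omega> (tens (Cgrp M d am) (bar M d am (q1 x)) (bar M d am (q1 y))) = q2 (pf x y)) \<and>
       (\<forall>n\<in>carrier C0. \<forall>x\<in>carrier C1. am n (q1 x) = q1 (a1 n x)) \<and>
       (\<forall>n\<in>carrier C0. \<forall>l\<in>carrier C2. al n (q2 l) = q2 (a2 n l)) \<and>
       quadratic_module L M C0 \<omega> \<delta> d am al"
proof (intro exI conjI ballI)
  show "dM \<in> hom M C0" by (rule dM(1))
  show "\<And>x. x \<in> carrier C1 \<Longrightarrow> dM (q1 x) = d1 x" by (rule dM(2))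
  show "delta \<in> hom L M" by (rule delta(1))
  show "\<And>l. l \<in> carrier C2 \<Longrightarrow> delta (q2 l) = q1 (d2 l)" by (rule delta(2))
  show "omega \<in> hom TT L" by (rule omega_hom)
  show "\<And>x y. x \<in> carrier C1 \<Longrightarrow> y \<in> carrier C1 \<Longrightarrow> omega (tens CC (bq x) (bq y)) = q2 (pf x y)"
    by (rule omega_bq)
  show "\<And>n x. n \<in> carrier C0 \<Longrightarrow> x \<in> carrier C1 \<Longrightarrow> actM n (q1 x) = q1 (a1 n x)" by (rule actM_q1)
  show "\<And>n l. n \<in> carrier C0 \<Longrightarrow> l \<in> carrier C2 \<Longrightarrow> actL n (q2 l) = q2 (a2 n l)" by (rule actL_q2)
  show "quadratic_module L M C0 omega delta dM actM actL" by (rule qm)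
qed

lemma first: "P \<lhd> C1 \<and> P' \<lhd> C2 \<and> d1 ` P = {\<one>\<^bsub>C0\<^esub>} \<and> d2 ` P' = P"
  using P_normal P'_normal d1_P d2_P' by blast

end


theorem proposition5p2:
  fixes C2 :: "('c2,'a) monoid_scheme" and C1 :: "('c1,'b) monoid_scheme"
    and C0 :: "('c0,'c) monoid_scheme"
    and d2 :: "'c2 \<Rightarrow> 'c1" and d1 :: "'c1 \<Rightarrow> 'c0"
    and a1 :: "'c0 \<Rightarrow> 'c1 \<Rightarrow> 'c1" and a2 :: "'c0 \<Rightarrow> 'c2 \<Rightarrow> 'c2"
    and pf :: "'c1 \<Rightarrow> 'c1 \<Rightarrow> 'c2"
  assumes X: "two_crossed_module C2 C1 C0 d2 d1 a1 a2 pf"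
  defines "P \<equiv> P3 C1 d1 a1" and "P' \<equiv> P3' C2 C1 d1 a1 pf"
  defines "M \<equiv> C1 Mod P" and "L \<equiv> C2 Mod P'"
  defines "q1 \<equiv> (\<lambda>x. P #>\<^bsub>C1\<^esub> x)" and "q2 \<equiv> (\<lambda>l. P' #>\<^bsub>C2\<^esub> l)"
  shows "P \<lhd> C1 \<and> P' \<lhd> C2 \<and> d1 ` P = {\<one>\<^bsub>C0\<^esub>} \<and> d2 ` P' = P \<and>
    (\<exists>d \<delta> \<omega> actM actL.
       d \<in> hom M C0 \<and> (\<forall>x\<in>carrier C1. d (q1 x) = d1 x) \<and>
       \<delta> \<in> hom L M \<and> (\<forall>l\<in>carrier C2. \<delta> (q2 l) = q1 (d2 l)) \<and>
       \<omega> \<in> hom (tensor (Cgrp M d actM)) L \<and>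
       (\<forall>x\<in>carrier C1. \<forall>y\<in>carrier C1.
          \<omega> (tens (Cgrp M d actM) (bar M d actM (q1 x)) (bar M d actM (q1 y))) = q2 (pf x y)) \<and>
       (\<forall>n\<in>carrier C0. \<forall>x\<in>carrier C1. actM n (q1 x) = q1 (a1 n x)) \<and>
       (\<forall>n\<in>carrier C0. \<forall>l\<in>carrier C2. actL n (q2 l) = q2 (a2 n l)) \<and>
       quadratic_module L M C0 \<omega> \<delta> d actM actL)"

proof -
  interpret T: tcm C2 C1 C0 d2 d1 a1 a2 pf by (rule tcm.intro[OF X])
  show ?thesis
    unfolding q1_def q2_def M_def L_def P_def P'_def
  proof (intro conjI)
    show "P3 C1 d1 a1 \<lhd> C1" by (rule T.P_normal)
    show "P3' C2 C1 d1 a1 pf \<lhd> C2" by (rule T.P'_normal)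
    show "d1 ` P3 C1 d1 a1 = {\<one>\<^bsub>C0\<^esub>}" by (rule T.d1_P)
    show "d2 ` P3' C2 C1 d1 a1 pf = P3 C1 d1 a1" by (rule T.d2_P')
  qed (rule T.main)
qed


end
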